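(* Let $d\ge2$, $\varepsilon_0>0$, $\lambda=e^{\varepsilon_0}$. Then $$\sup_{\rho\in\mathfrak M_d:\,W_\rho\ \varepsilon_0\text{-LDP}}\operatorname{tr}\Sigma(\rho)=T^*_d(\lambda).$$ For every $s_*\in\mathcal S^*_{d,\lambda}$ the law $\rho_{s_*,\lambda}$ is $\varepsilon_0$-LDP-feasible and attains this supremum. An exchangeable feasible law attains the supremum if and only if it is a convex combination of the laws $\{\rho_{s,\lambda}:s\in\mathcal S^*_{d,\lambda}\}$; in particular the extreme exchangeable maximizers are exactly the $\rho_{s,\lambda}$ with $s\in\mathcal S^*_{d,\lambda}$. Finally, $$\mathcal S^*_{d,\lambda}\subseteq\Big\{\Big\lfloor\frac{d}{\lambda+1}\Big\rfloor,\Big\lceil\frac{d}{\lambda+1}\Big\rceil\Big\}\cap\{1,\dots,d-1\}.$$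
   Context: Let $H\in\mathbb R^{d\times(d-1)}$ have orthonormal columns spanning $\{u\in\mathbb R^d:\mathbf 1^\top u=0\}$, $\gamma_i:=H^\top e_i$, $\mathcal X_d:=\{x\in\mathbb R^{d-1}:1+\gamma_i^\top x\ge0\ \forall i\}$, and let $x(a):=H^\top(a-\mathbf 1)$ for $a\in\mathcal K_d:=\{a\in\mathbb R^d_+:\sum a_i=d\}$ (an affine bijection onto $\mathcal X_d$). An anchored law is a Borel probability measure $\rho$ on $\mathcal X_d$ with $\int x\,\rho(dx)=0$; $\mathfrak M_d$ is the set of anchored laws; $W_\rho(B\mid i):=\int_B(1+\gamma_i^\top x)\rho(dx)$; $\Sigma(\rho):=\int xx^\top\rho(dx)$. $W_\rho$ is $\varepsilon_0$-LDP if $W_\rho(B\mid j)\le e^{\varepsilon_0}W_\rho(B\mid i)$ for all Borel $B$ and all $i,j$. For a permutation $\pi$ with matrix $\Pi$, $P_\pi:=H^\top\Pi H$; $\rho$ is exchangeable if $(P_\pi)_\#\rho=\rho$ for all $\pi$. For $1\le s\le d-1$: $\beta_s(\lambda):=\frac{d}{d+s(\lambda-1)}$, $\alpha_s(\lambda):=\lambda\beta_s(\lambda)$, $a^{(s)}_\lambda$ the vector with $s$ coordinates $\alpha_s(\lambda)$ followed by $d-s$ coordinates $\beta_s(\lambda)$, and $\rho_{s,\lambda}:=\frac1{d!}\sum_\pi\delta_{P_\pi x(a^{(s)}_\lambda)}$ (the $s$-subset mechanism). $T_{d,\lambda}(s):=\frac{d\,s(d-s)(\lambda-1)^2}{(d+s(\lambda-1))^2}$,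 $T^*_d(\lambda):=\max_{1\le s\le d-1}T_{d,\lambda}(s)$, $\mathcal S^*_{d,\lambda}:=\operatorname{argmax}_{1\le s\le d-1}T_{d,\lambda}(s)$. *)

theory Defs
  imports "HOL-Probability.Probability"
begin

text \<open>Coordinates of R^d are indexed by a finite linearly ordered type 'd (d = CARD('d));
  the reduced space R^(d-1) is indexed by a finite type 'm with CARD('m) + 1 = CARD('d).\<close>

definition ones :: "real^'d" where "ones = (\<chi> i. 1)"

definition gamma :: "real^'m^'d \<Rightarrow> 'd \<Rightarrow> real^'m" where
  "gamma H i = transpose H *v axis i 1"

definition Xd :: "real^'m^'d \<Rightarrow> (real^'m) set" where
  "Xd H = {x. \<forall>i. 1 + gamma H i \<bullet> x \<ge> 0}"

definition xmap :: "real^'m^'d \<Rightarrow> real^'d \<Rightarrow> real^'m" where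
  "xmap H a = transpose H *v (a - ones)"

definition anchored :: "real^'m^'d \<Rightarrow> (real^'m) measure \<Rightarrow> bool" where
  "anchored H \<rho> \<longleftrightarrow> prob_space \<rho> \<and> sets \<rho> = sets borel \<and> emeasure \<rho> (Xd H) = 1
     \<and> integrable \<rho> (\<lambda>x. x) \<and> (\<integral>x. x \<partial>\<rho>) = 0"

definition W :: "real^'m^'d \<Rightarrow> (real^'m) measure \<Rightarrow> (real^'m) set \<Rightarrow> 'd \<Rightarrow> real" where
  "W H \<rho> B i = (LINT x:B|\<rho>. 1 + gamma H i \<bullet> x)"

definition LDP :: "real^'m^'d \<Rightarrow> real \<Rightarrow> (real^'m) measure \<Rightarrow> bool" where
  "LDP H \<epsilon> \<rho> \<longleftrightarrow> (\<forall>B\<in>sets borel. \<forall>i j. W H \<rho> B j \<le> exp \<epsilon> * W H \<rho> B i)"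

definition Sigma_mat :: "(real^'m) measure \<Rightarrow> real^'m^'m" where
  "Sigma_mat \<rho> = (\<chi> k l. \<integral>x. x$k * x$l \<partial>\<rho>)"

definition perm_matrix :: "('d \<Rightarrow> 'd) \<Rightarrow> real^'d^'d" where
  "perm_matrix \<pi> = (\<chi> i j. if i = \<pi> j then 1 else 0)"

definition Pperm :: "real^'m^'d \<Rightarrow> ('d \<Rightarrow> 'd) \<Rightarrow> real^'m^'m" where
  "Pperm H \<pi> = transpose H ** perm_matrix \<pi> ** H"

definition exchangeable :: "real^'m^'d \<Rightarrow> (real^'m) measure \<Rightarrow> bool" where
  "exchangeable H \<rho> \<longleftrightarrow>
     (\<forall>\<pi>. \<pi> permutes (UNIV::'d set) \<longrightarrow> distr \<rho> borel (\<lambda>x. Pperm H \<pi> *v x) = \<rho>)"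

definition beta_s :: "nat \<Rightarrow> nat \<Rightarrow> real \<Rightarrow> real" where
  "beta_s d s lam = real d / (real d + real s * (lam - 1))"

definition alpha_s :: "nat \<Rightarrow> nat \<Rightarrow> real \<Rightarrow> real" where
  "alpha_s d s lam = lam * beta_s d s lam"

definition a_vec :: "nat \<Rightarrow> real \<Rightarrow> real^'d::{finite,linorder}" where
  "a_vec s lam = (\<chi> i. if card {j. j < i} < s then alpha_s CARD('d) s lam else beta_s CARD('d) s lam)"

definition rho_s :: "real^'m^'d::{finite,linorder} \<Rightarrow> nat \<Rightarrow> real \<Rightarrow> (real^'m) measure" where
  "rho_s H s lam = distr (uniform_count_measure {\<pi>. \<pi> permutes (UNIV::'d set)}) borel
      (\<lambda>\<pi>. Pperm H \<pi> *v xmap H (a_vec s lam))"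

definition T :: "nat \<Rightarrow> real \<Rightarrow> nat \<Rightarrow> real" where
  "T d lam s = real d * real s * (real d - real s) * (lam - 1)^2 / (real d + real s * (lam - 1))^2"

definition Tstar :: "nat \<Rightarrow> real \<Rightarrow> real" where
  "Tstar d lam = Max (T d lam ` {1..d-1})"

definition Sstar :: "nat \<Rightarrow> real \<Rightarrow> nat set" where
  "Sstar d lam = {s \<in> {1..d-1}. T d lam s = Tstar d lam}"

definition is_mix :: "(real^'m) measure \<Rightarrow> real \<Rightarrow> (real^'m) measure \<Rightarrow> (real^'m) measure \<Rightarrow> bool" where
  "is_mix \<rho> t \<mu> \<nu> \<longleftrightarrow> (\<forall>A\<in>sets borel. measure \<rho> A = t * measure \<mu> A + (1 - t) * measure \<nu> A)"

definition extreme_point :: "(real^'m) measure set \<Rightarrow> (real^'m) measure \<Rightarrow> bool" where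
  "extreme_point M \<rho> \<longleftrightarrow> \<rho> \<in> M \<and>
     (\<forall>\<mu>\<in>M. \<forall>\<nu>\<in>M. \<forall>t. 0 < t \<and> t < 1 \<and> is_mix \<rho> t \<mu> \<nu> \<longrightarrow> \<mu> = \<rho> \<and> \<nu> = \<rho>)"

end

theory Submission
  imports Defs
begin

lemma K_ident:
  fixes A B x y :: real
  shows "(A + y^2)*(B+x)^2 - (A+x^2)*(B+y)^2 = (y-x)*((x+y)*(B^2-A) + 2*B*(x*y-A))"
  by (simp add: algebra_simps power2_eq_square)

lemma K_pos:
  fixes A B x y :: real
  assumes "0 \<le> A" "0 < B" "0 < x" "x < y" "A \<le> B*x"
  shows "(x+y)*(B^2-A) + 2*B*(x*y-A) > 0"
proof -
  have "B*y > B*x" using assms by simp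
  have 1: "B*(B*x) \<ge> B*A" using assms by simp
  have "B*y > A" using assms \<open>B*y > B*x\<close> by linarith
  then have 2: "B*(B*y) > B*A" using assms by simp
  have 3: "(B*x)*y \<ge> A*y" using assms by (intro mult_right_mono) auto
  have 4: "A*y \<ge> A*x" using assms by (intro mult_left_mono) auto
  have "(x+y)*(B^2-A) + 2*B*(x*y-A) = B*(B*x) + B*(B*y) - 2*(B*A) + (2*((B*x)*y) - A*x - A*y)"
    by (simp add: algebra_simps power2_eq_square)
  also have "\<dots> > 0" using 1 2 3 4 by linarith
  finally show ?thesis .
qed

lemma K_neg:
  fixes A B x y :: real
  assumes "0 \<le> A" "0 < B" "0 < y" "y < x" "B*x \<le> A"
  shows "(x+y)*(B^2-A) + 2*B*(x*y-A) < 0"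
proof -
  have "B*y < B*x" using assms by simp
  have 1: "B*(B*x) \<le> B*A" using assms by simp
  have "B*y < A" using assms \<open>B*y < B*x\<close> by linarith
  then have 2: "B*(B*y) < B*A" using assms by simp
  have 3: "(B*x)*y \<le> A*y" using assms by (intro mult_right_mono) auto
  have 4: "(B*y)*x < A*x" using assms \<open>B*y < A\<close> by (intro mult_strict_right_mono) auto
  have "(x+y)*(B^2-A) + 2*B*(x*y-A) = B*(B*x) + B*(B*y) - 2*(B*A) + (((B*x)*y) + (B*y)*x - A*x - A*y)"
    by (simp add: algebra_simps power2_eq_square)
  also have "\<dots> < 0" using 1 2 3 4 by linarith
  finally show ?thesis .
qed

lemma quasi1:
  fixes A B x l :: real
  assumes A: "0 \<le> A" and B: "0 < B" and x1: "1 \<le> x" and xl: "x \<le> l"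
  shows "(A + x^2)/(B+x)^2 \<le> max ((A+1)/(B+1)^2) ((A+l^2)/(B+l)^2)"
    and "1 < x \<Longrightarrow> x < l \<Longrightarrow> (A + x^2)/(B+x)^2 < max ((A+1)/(B+1)^2) ((A+l^2)/(B+l)^2)"
proof -
  have pos: "\<And>z. 0 < z \<Longrightarrow> (B+z)^2 > 0" using B by simp
  have le_l: "(A + x^2)/(B+x)^2 \<le> (A+l^2)/(B+l)^2" and lt_l: "x < l \<Longrightarrow> (A + x^2)/(B+x)^2 < (A+l^2)/(B+l)^2"
    if "A \<le> B*x"
  proof -
    have "(A + l^2)*(B+x)^2 - (A+x^2)*(B+l)^2 \<ge> 0"
    proof (cases "x = l")
      case False
      then have "x < l" using xl by simp
      then show ?thesis using K_pos[OF A B _ _ that, of l] x1 K_ident[of A l B x] by (simp add: mult_pos_pos)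
    qed simp
    then show "(A + x^2)/(B+x)^2 \<le> (A+l^2)/(B+l)^2"
      using pos[of x] pos[of l] x1 xl by (simp add: divide_simps)
    assume "x < l"
    then have "(A + l^2)*(B+x)^2 - (A+x^2)*(B+l)^2 > 0"
      using K_pos[OF A B _ _ that, of l] x1 K_ident[of A l B x] by (simp add: mult_pos_pos)
    then show "(A + x^2)/(B+x)^2 < (A+l^2)/(B+l)^2"
      using pos[of x] pos[of l] x1 xl by (simp add: divide_simps)
  qed
  have le_1: "(A + x^2)/(B+x)^2 \<le> (A+1)/(B+1)^2" and lt_1: "1 < x \<Longrightarrow> (A + x^2)/(B+x)^2 < (A+1)/(B+1)^2"
    if "B*x \<le> A"
  proof -
    have "(A + 1^2)*(B+x)^2 - (A+x^2)*(B+1)^2 \<ge> 0"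
    proof (cases "x = 1")
      case False
      then have "1 < x" using x1 by simp
      then have "(1-x)*((x+1)*(B^2-A) + 2*B*(x*1-A)) > 0"
        using K_neg[OF A B _ _ that, of 1] by (intro mult_neg_neg) auto
      then show ?thesis using K_ident[of A 1 B x] by simp
    qed simp
    then show "(A + x^2)/(B+x)^2 \<le> (A+1)/(B+1)^2"
      using pos[of x] pos[of 1] x1 xl by (simp add: divide_simps)
    assume "1 < x"
    then have "(A + 1^2)*(B+x)^2 - (A+x^2)*(B+1)^2 > 0"
    proof -
      have "(1-x)*((x+1)*(B^2-A) + 2*B*(x*1-A)) > 0"
        using K_neg[OF A B _ _ that, of 1] \<open>1 < x\<close> by (intro mult_neg_neg) auto
      then show ?thesis using K_ident[of A 1 B x] by simp
    qed
    then show "(A + x^2)/(B+x)^2 < (A+1)/(B+1)^2"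
      using pos[of x] pos[of 1] x1 xl by (simp add: divide_simps)
  qed
  show "(A + x^2)/(B+x)^2 \<le> max ((A+1)/(B+1)^2) ((A+l^2)/(B+l)^2)"
    using le_l le_1 by (cases "A \<le> B*x") (auto simp: max_def)
  assume "1 < x" "x < l"
  then show "(A + x^2)/(B+x)^2 < max ((A+1)/(B+1)^2) ((A+l^2)/(B+l)^2)"
    using lt_l lt_1 by (cases "A \<le> B*x") (auto simp: max_def)
qed

definition gq :: "('d::finite \<Rightarrow> real) \<Rightarrow> real" where
  "gq u = (\<Sum>i\<in>UNIV. (u i)^2) / (\<Sum>i\<in>UNIV. u i)^2"

definition Gs :: "nat \<Rightarrow> real \<Rightarrow> nat \<Rightarrow> real" where
  "Gs d l s = (real d + (l^2-1)*real s)/(real d + (l-1)*real s)^2"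

lemma gq_upd:
  fixes u :: "'d::finite \<Rightarrow> real"
  shows "gq (u(j:=x)) = ((\<Sum>i\<in>UNIV-{j}. (u i)^2) + x^2) / ((\<Sum>i\<in>UNIV-{j}. u i) + x)^2"
proof -
  have a: "(\<Sum>i\<in>UNIV. ((u(j:=x)) i)^2) = x^2 + (\<Sum>i\<in>UNIV-{j}. ((u(j:=x)) i)^2)"
    by (subst sum.remove[of _ j]) auto
  have b: "(\<Sum>i\<in>UNIV. (u(j:=x)) i) = x + (\<Sum>i\<in>UNIV-{j}. (u(j:=x)) i)"
    by (subst sum.remove[of _ j]) auto
  have c: "(\<Sum>i\<in>UNIV-{j}. ((u(j:=x)) i)^2) = (\<Sum>i\<in>UNIV-{j}. (u i)^2)"
    by (rule sum.cong) auto
  have e: "(\<Sum>i\<in>UNIV-{j}. (u(j:=x)) i) = (\<Sum>i\<in>UNIV-{j}. u i)"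
    by (rule sum.cong) auto
  show ?thesis unfolding gq_def a b c e by (simp add: add.commute)
qed

lemma gq_base:
  fixes u :: "'d::finite \<Rightarrow> real"
  assumes "\<forall>i. u i = 1 \<or> u i = l" "l \<noteq> 1"
  shows "gq u = Gs CARD('d) l (card {i. u i = l})"
proof -
  let ?S = "{i. u i = l}"
  have cc: "card (- ?S) = CARD('d) - card ?S"
    unfolding Compl_eq_Diff_UNIV by (rule card_Diff_subset) auto
  have cle: "card ?S \<le> CARD('d)" by (rule card_mono) auto
  have 1: "(\<Sum>i\<in>UNIV. (u i)^2) = (\<Sum>i\<in>UNIV. if u i = l then l^2 else 1)"
    by (rule sum.cong[OF refl]) (use assms in \<open>metis power_one\<close>)
  have 2: "(\<Sum>i\<in>UNIV. u i) = (\<Sum>i\<in>UNIV. if u i = l then l else 1)"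
    by (rule sum.cong) (use assms in auto)
  have 3: "(\<Sum>i\<in>UNIV. (u i)^2) = real (card ?S) * l^2 + (real CARD('d) - real (card ?S))"
    unfolding 1 sum.If_cases[OF finite_class.finite_UNIV] using cc cle by (simp add: of_nat_diff)
  have 4: "(\<Sum>i\<in>UNIV. u i) = real (card ?S) * l + (real CARD('d) - real (card ?S))"
    unfolding 2 sum.If_cases[OF finite_class.finite_UNIV] using cc cle by (simp add: of_nat_diff)
  show ?thesis unfolding gq_def Gs_def 3 4 by (simp add: algebra_simps)
qed

lemma vertex:
  fixes l :: real
  assumes l: "l > 1" and d2: "CARD('d::finite) \<ge> 2"
  shows "finite J \<Longrightarrow> \<forall>u::'d \<Rightarrow> real. (\<forall>i. 1 \<le> u i \<and> u i \<le> l) \<longrightarrow> (\<forall>i. i \<notin> J \<longrightarrow> u i = 1 \<or> u i = l)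
     \<longrightarrow> (\<exists>s \<le> CARD('d). gq u \<le> Gs CARD('d) l s)
        \<and> ((\<exists>i. u i \<noteq> 1 \<and> u i \<noteq> l) \<longrightarrow> (\<exists>s\<le>CARD('d). gq u < Gs CARD('d) l s))"
proof (induction J rule: finite_induct)
  case empty
  show ?case
  proof (intro allI impI)
    fix u :: "'d \<Rightarrow> real"
    assume "\<forall>i. i \<notin> {} \<longrightarrow> u i = 1 \<or> u i = l"
    then have u: "\<forall>i. u i = 1 \<or> u i = l" by simp
    have "card {i. u i = l} \<le> CARD('d)" by (rule card_mono) auto
    then show "(\<exists>s \<le> CARD('d). gq u \<le> Gs CARD('d) l s)
        \<and> ((\<exists>i. u i \<noteq> 1 \<and> u i \<noteq> l) \<longrightarrow> (\<exists>s\<le>CARD('d). gq u < Gs CARD('d) l s))"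
      using gq_base[OF u] l u by auto
  qed
next
  case (insert j J)
  show ?case
  proof (intro allI impI)
    fix u :: "'d \<Rightarrow> real"
    assume box: "\<forall>i. 1 \<le> u i \<and> u i \<le> l" and out: "\<forall>i. i \<notin> insert j J \<longrightarrow> u i = 1 \<or> u i = l"
    show "(\<exists>s \<le> CARD('d). gq u \<le> Gs CARD('d) l s)
        \<and> ((\<exists>i. u i \<noteq> 1 \<and> u i \<noteq> l) \<longrightarrow> (\<exists>s\<le>CARD('d). gq u < Gs CARD('d) l s))"
    proof (cases "u j = 1 \<or> u j = l")
      case True
      then have "\<forall>i. i \<notin> J \<longrightarrow> u i = 1 \<or> u i = l" using out by auto
      then show ?thesis using insert.IH box by blast
    next
      case False
      define u1 where "u1 = u(j:=1)"
      define u2 where "u2 = u(j:=l)"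
      have b1: "\<forall>i. 1 \<le> u1 i \<and> u1 i \<le> l" "\<forall>i. i \<notin> J \<longrightarrow> u1 i = 1 \<or> u1 i = l"
        using box out l unfolding u1_def by auto
      have b2: "\<forall>i. 1 \<le> u2 i \<and> u2 i \<le> l" "\<forall>i. i \<notin> J \<longrightarrow> u2 i = 1 \<or> u2 i = l"
        using box out l unfolding u2_def by auto
      obtain s1 where s1: "s1 \<le> CARD('d)" "gq u1 \<le> Gs CARD('d) l s1" using insert.IH b1 by blast
      obtain s2 where s2: "s2 \<le> CARD('d)" "gq u2 \<le> Gs CARD('d) l s2" using insert.IH b2 by blast
      define A where "A = (\<Sum>i\<in>UNIV-{j}. (u i)^2)"
      define B where "B = (\<Sum>i\<in>UNIV-{j}. u i)"
      have A0: "0 \<le> A" unfolding A_def by (intro sum_nonneg) auto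
      have ne: "UNIV - {j} \<noteq> {}"
      proof
        assume "UNIV - {j} = {}"
        then have "(UNIV::'d set) = {j}" by auto
        then have "card (UNIV::'d set) = card {j}" by (rule arg_cong)
        then show False using d2 by simp
      qed
      have B0: "0 < B" unfolding B_def using box ne
        by (intro sum_pos) (auto intro: less_le_trans[of 0 1])
      have uu: "u = u(j := u j)" by simp
      have "gq u < max (gq u1) (gq u2)"
        using quasi1(2)[OF A0 B0, of "u j" l] box False
        unfolding u1_def u2_def gq_upd A_def[symmetric] B_def[symmetric]
        by (subst uu, subst gq_upd) (auto simp: A_def B_def order_le_less)
      then have "gq u < Gs CARD('d) l s1 \<or> gq u < Gs CARD('d) l s2" using s1 s2 by linarith
      then show ?thesis using s1 s2 by (auto intro: less_imp_le)
    qed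
  qed
qed

lemma sums_base:
  fixes u :: "'d::finite \<Rightarrow> real"
  assumes "\<forall>i. u i = 1 \<or> u i = l" "l \<noteq> 1"
  shows "(\<Sum>i\<in>UNIV. u i) = real (card {i. u i = l}) * l + (real CARD('d) - real (card {i. u i = l}))"
proof -
  let ?S = "{i. u i = l}"
  have cc: "card (- ?S) = CARD('d) - card ?S"
    unfolding Compl_eq_Diff_UNIV by (rule card_Diff_subset) auto
  have cle: "card ?S \<le> CARD('d)" by (rule card_mono) auto
  have 2: "(\<Sum>i\<in>UNIV. u i) = (\<Sum>i\<in>UNIV. if u i = l then l else 1)"
    by (rule sum.cong) (use assms in auto)
  show ?thesis
    unfolding 2 sum.If_cases[OF finite_class.finite_UNIV] using cc cle by (simp add: of_nat_diff)
qed

lemma Gs_T: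
  assumes "d > 0" "l > 1"
  shows "real d ^2 * Gs d l s - real d = T d l s"
proof -
  define D where "D = real d + (l-1)*real s"
  have D0: "D > 0" unfolding D_def using assms by (simp add: add_pos_nonneg)
  have D': "real d + real s * (l-1) = D" unfolding D_def by simp
  have e: "real d ^2 * (real d + (l^2-1)*real s) - real d * D^2 = real d * real s * (real d - real s) * (l-1)^2"
    unfolding D_def by (simp add: power2_eq_square algebra_simps)
  have "real d ^2 * Gs d l s - real d = (real d ^2 * (real d + (l^2-1)*real s) - real d * D^2) / D^2"
    unfolding Gs_def D_def[symmetric] using D0 by (simp add: field_simps)
  also have "\<dots> = T d l s" unfolding e T_def D' ..
  finally show ?thesis .
qed

lemma T_pos:
  assumes "1 \<le> s" "s < d" "l > 1"
  shows "T d l s > 0"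
proof -
  have "real d + real s*(l-1) > 0" using assms by (simp add: add_pos_nonneg)
  moreover have "real d * real s * (real d - real s) * (l-1)^2 > 0" using assms by simp
  ultimately show ?thesis unfolding T_def by simp
qed

lemma T_0: "T d l 0 = 0" and T_d: "T d l d = 0" unfolding T_def by simp_all

lemma T_le_Tstar:
  assumes "s \<le> d" "d \<ge> 2" "l > 1"
  shows "T d l s \<le> Tstar d l"
proof -
  have fin: "finite (T d l ` {1..d-1})" by simp
  have T1: "T d l 1 \<le> Tstar d l" unfolding Tstar_def using assms by (intro Max_ge) auto
  have "0 < T d l 1" using assms by (intro T_pos) auto
  then have Tpos: "0 < Tstar d l" using T1 by linarith
  show ?thesis
  proof (cases "s = 0 \<or> s = d")
    case True then show ?thesis using Tpos T_0 T_d by auto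
  next
    case False
    then show ?thesis unfolding Tstar_def using assms by (intro Max_ge) auto
  qed
qed

lemma Tstar_pos:
  assumes "d \<ge> 2" "l > 1"
  shows "0 < Tstar d l"
proof -
  have T1: "T d l 1 \<le> Tstar d l" using T_le_Tstar[of 1 d l] assms by simp
  have "0 < T d l 1" using assms by (intro T_pos) auto
  then show ?thesis using T1 by linarith
qed

lemma pw:
  fixes a :: "'d::finite \<Rightarrow> real" and l :: real
  assumes l: "l > 1" and d2: "CARD('d) \<ge> 2"
    and sum: "(\<Sum>i\<in>UNIV. a i) = real CARD('d)"
    and nonneg: "\<forall>i. 0 \<le> a i" and ldp: "\<forall>i j. a j \<le> l * a i"
  shows "(\<Sum>i\<in>UNIV. (a i - 1)^2) \<le> Tstar CARD('d) l"
    and "(\<Sum>i\<in>UNIV. (a i - 1)^2) = Tstar CARD('d) l \<Longrightarrow>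
         \<exists>s\<in>Sstar CARD('d) l. (\<forall>i. a i = alpha_s CARD('d) s l \<or> a i = beta_s CARD('d) s l)
             \<and> card {i. a i = alpha_s CARD('d) s l} = s"
proof -
  let ?d = "CARD('d)"
  obtain j0 where j0: "a j0 > 0"
  proof (rule ccontr)
    assume "\<not> thesis"
    then have "\<forall>i. a i \<le> 0" using that by (meson not_less)
    then have "(\<Sum>i\<in>UNIV. a i) \<le> 0" by (simp add: sum_nonpos)
    then show False using sum by simp
  qed
  define m where "m = Min (range a)"
  have m_in: "m \<in> range a" unfolding m_def by (intro Min_in) auto
  then obtain i0 where i0: "m = a i0" by auto
  have m_le: "\<And>i. m \<le> a i" unfolding m_def by (intro Min_le) auto
  have "a j0 \<le> l * m" using ldp i0 by auto
  then have "l * m > 0" using j0 by linarith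
  then have m0: "m > 0" using l by (intro zero_less_mult_pos[of l m]) auto
  define u where "u i = a i / m" for i
  have ubox: "\<forall>i. 1 \<le> u i \<and> u i \<le> l"
    using m_le ldp i0 m0 unfolding u_def by (auto simp: field_simps)
  have gqa: "gq u = (\<Sum>i\<in>UNIV. (a i)^2) / real ?d ^ 2"
  proof -
    have 1: "(\<Sum>i\<in>UNIV. (u i)^2) = (\<Sum>i\<in>UNIV. (a i)^2) / m^2"
      unfolding u_def by (simp add: power_divide sum_divide_distrib)
    have 2: "(\<Sum>i\<in>UNIV. u i) = real ?d / m"
      unfolding u_def by (simp add: sum_divide_distrib[symmetric] sum)
    show ?thesis unfolding gq_def 1 2 using m0 by (simp add: power_divide)
  qed
  have sq: "(\<Sum>i\<in>UNIV. (a i - 1)^2) = (\<Sum>i\<in>UNIV. (a i)^2) - real ?d"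
  proof -
    have "(\<Sum>i\<in>UNIV. (a i - 1)^2) = (\<Sum>i\<in>UNIV. (a i)^2 - 2 * a i + 1)"
      by (rule sum.cong) (auto simp: power2_eq_square algebra_simps)
    also have "\<dots> = (\<Sum>i\<in>UNIV. (a i)^2) - 2 * (\<Sum>i\<in>UNIV. a i) + real ?d"
      by (simp add: sum.distrib sum_subtractf sum_distrib_left)
    finally show ?thesis using sum by simp
  qed
  have key: "(\<Sum>i\<in>UNIV. (a i - 1)^2) = real ?d ^2 * gq u - real ?d"
    unfolding sq gqa by simp
  have d0: "?d > 0" using d2 by simp
  have V: "(\<exists>s \<le> ?d. gq u \<le> Gs ?d l s)
        \<and> ((\<exists>i. u i \<noteq> 1 \<and> u i \<noteq> l) \<longrightarrow> (\<exists>s\<le>?d. gq u < Gs ?d l s))"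
    using vertex[OF l d2 finite_class.finite_UNIV] ubox by auto
  have dd: "real ?d ^ 2 > 0" using d0 by simp
  show le: "(\<Sum>i\<in>UNIV. (a i - 1)^2) \<le> Tstar ?d l"
  proof -
    obtain s where s: "s \<le> ?d" "gq u \<le> Gs ?d l s" using V by blast
    have "real ?d ^2 * gq u \<le> real ?d ^2 * Gs ?d l s" using s dd by simp
    then have "(\<Sum>i\<in>UNIV. (a i - 1)^2) \<le> T ?d l s" using key Gs_T[OF d0 l, of s] by linarith
    also have "\<dots> \<le> Tstar ?d l" using T_le_Tstar[OF s(1) d2 l] .
    finally show ?thesis .
  qed
  assume eq: "(\<Sum>i\<in>UNIV. (a i - 1)^2) = Tstar ?d l"
  have u01: "\<forall>i. u i = 1 \<or> u i = l"
  proof (rule ccontr)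
    assume "\<not> (\<forall>i. u i = 1 \<or> u i = l)"
    then obtain s where s: "s \<le> ?d" "gq u < Gs ?d l s" using V by blast
    have "real ?d ^2 * gq u < real ?d ^2 * Gs ?d l s" using s dd by simp
    then have "(\<Sum>i\<in>UNIV. (a i - 1)^2) < T ?d l s" using key Gs_T[OF d0 l, of s] by linarith
    also have "\<dots> \<le> Tstar ?d l" using T_le_Tstar[OF s(1) d2 l] .
    finally show False using eq by simp
  qed
  define s0 where "s0 = card {i. u i = l}"
  have s0d: "s0 \<le> ?d" unfolding s0_def by (rule card_mono) auto
  have Ts0: "T ?d l s0 = Tstar ?d l"
    using key eq gq_base[OF u01] l Gs_T[OF d0 l, of s0] unfolding s0_def by simp
  have Tp: "Tstar ?d l > 0" using Tstar_pos d2 l by simp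
  have "s0 \<noteq> 0"
  proof
    assume "s0 = 0" then show False using Ts0 T_0[of ?d l] Tp by simp
  qed
  moreover have "s0 \<noteq> ?d"
  proof
    assume "s0 = ?d" then show False using Ts0 T_d[of ?d l] Tp by simp
  qed
  ultimately have "s0 \<noteq> 0" "s0 \<noteq> ?d" by auto
  then have s0S: "s0 \<in> Sstar ?d l" unfolding Sstar_def using Ts0 s0d by auto
  have sumu: "(\<Sum>i\<in>UNIV. u i) = real ?d + (l-1) * real s0"
    using sums_base[OF u01] l s0d unfolding s0_def by (simp add: algebra_simps)
  have "(\<Sum>i\<in>UNIV. u i) = real ?d / m"
    unfolding u_def by (simp add: sum_divide_distrib[symmetric] sum)
  then have mm: "m * (real ?d + real s0 * (l-1)) = real ?d" using sumu m0 by (simp add: field_simps)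
  have "real ?d + real s0 * (l-1) > 0" using d0 l by (simp add: add_pos_nonneg)
  then have mval: "m = beta_s ?d s0 l"
    unfolding beta_s_def using mm by (simp add: eq_divide_eq)
  have ai: "\<And>i. a i = m * u i" unfolding u_def using m0 by simp
  have alpha: "alpha_s ?d s0 l = l * m" unfolding alpha_s_def mval by simp
  have "l * m \<noteq> m" using l m0 by simp
  then have "{i. a i = alpha_s ?d s0 l} = {i. u i = l}"
    using u01 ai alpha m0 by (auto)
  then show "\<exists>s\<in>Sstar ?d l. (\<forall>i. a i = alpha_s ?d s l \<or> a i = beta_s ?d s l)
             \<and> card {i. a i = alpha_s ?d s l} = s"
    using s0S u01 ai alpha mval unfolding s0_def by (intro bexI[of _ s0]) (auto simp: s0_def)
qed

lemma T_cross:
  fixes x y c :: real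
  assumes y: "y > 0" and c: "c > 0" and x: "x \<ge> 0" and x1: "x1 \<ge> 0"
    and key: "x*(y-x)*(y+x1*c)^2 < x1*(y-x1)*(y+x*c)^2"
  shows "y*x*(y-x)*c^2/(y+x*c)^2 < y*x1*(y-x1)*c^2/(y+x1*c)^2"
proof -
  have p1: "y+x*c > 0" "y+x1*c > 0" using assms by (auto intro!: add_pos_nonneg)
  then have p0: "(y+x*c)^2 > 0" "(y+x1*c)^2 > 0" by auto
  have "y*c^2 > 0" using assms by simp
  then have "(y*c^2)*(x*(y-x)*(y+x1*c)^2) < (y*c^2)*(x1*(y-x1)*(y+x*c)^2)"
    using mult_strict_left_mono[OF key] by blast
  then show ?thesis using p0 p1 by (simp add: divide_simps algebra_simps)
qed

lemma T_inc:
  fixes d s :: nat and l :: real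
  assumes l: "l > 1" and q: "(real s + 1)*(l+1) \<le> real d"
  shows "T d l s < T d l (s+1)"
proof -
  define c where "c = l - 1"
  define x where "x = real s"
  define y where "y = real d"
  define u where "u = y - (x+1)*(c+2)"
  have c0: "c > 0" and x0: "x \<ge> 0" and u0: "u \<ge> 0"
    using l q unfolding c_def x_def u_def y_def by (auto simp: algebra_simps)
  have "(x+1)*(c+2) > 0" using x0 c0 by (intro mult_pos_pos) auto
  then have y0: "y > 0" using u0 unfolding u_def by linarith
  have id: "(x+1)*(y-(x+1))*(y+x*c)^2 - x*(y-x)*(y+(x+1)*c)^2 = (4) + ((8 * c) + ((5 * c^2) + ((c^3) + ((8 * x) + ((16 * x * c) + ((10 * x * c^2) + ((2 * x * c^3) + ((4 * x^2) + ((8 * x^2 * c) + ((5 * x^2 * c^2) + ((x^2 * c^3) + ((8 * u) + ((10 * u * c) + ((3 * u * c^2) + ((12 * u * x) + ((16 * u * x * c) + ((5 * u * x * c^2) + ((4 * u * x^2) + ((6 * u * x^2 * c) + ((2 * u * x^2 * c^2) + ((5 * u^2) + ((3 * u^2 * c) + ((4 * u^2 * x) + ((3 * u^2 * x * c) + (u^3)))))))))))))))))))))))))"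
    unfolding u_def by (simp add: algebra_simps power2_eq_square power3_eq_cube)
  have "0 < (4) + ((8 * c) + ((5 * c^2) + ((c^3) + ((8 * x) + ((16 * x * c) + ((10 * x * c^2) + ((2 * x * c^3) + ((4 * x^2) + ((8 * x^2 * c) + ((5 * x^2 * c^2) + ((x^2 * c^3) + ((8 * u) + ((10 * u * c) + ((3 * u * c^2) + ((12 * u * x) + ((16 * u * x * c) + ((5 * u * x * c^2) + ((4 * u * x^2) + ((6 * u * x^2 * c) + ((2 * u * x^2 * c^2) + ((5 * u^2) + ((3 * u^2 * c) + ((4 * u^2 * x) + ((3 * u^2 * x * c) + (u^3)))))))))))))))))))))))))"
    using u0 x0 c0 by (intro add_pos_nonneg add_nonneg_nonneg mult_nonneg_nonneg zero_le_power) auto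
  then have "x*(y-x)*(y+(x+1)*c)^2 < (x+1)*(y-(x+1))*(y+x*c)^2" using id by linarith
  then have "y*x*(y-x)*c^2/(y+x*c)^2 < y*(x+1)*(y-(x+1))*c^2/(y+(x+1)*c)^2"
    using T_cross[OF y0 c0 x0, of "x+1"] x0 by simp
  then show ?thesis unfolding T_def c_def x_def y_def by (simp add: algebra_simps)
qed

lemma T_dec:
  fixes d s :: nat and l :: real
  assumes l: "l > 1" and s1: "s \<ge> 1" and q: "real s*(l+1) \<ge> real d" and sd: "s + 2 \<le> d"
  shows "T d l (s+1) < T d l s"
proof -
  define c where "c = l - 1"
  define x where "x = real s"
  define y where "y = real d"
  define v where "v = x*(c+2) - y"
  define w where "w = y - x - 2"
  have c0: "c > 0" and x0: "x \<ge> 1" and v0: "v \<ge> 0" and w0: "w \<ge> 0"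
    using l q s1 sd unfolding c_def x_def v_def y_def w_def by (auto simp: algebra_simps)
  have y0: "y > 0" using w0 x0 unfolding w_def by simp
  have id: "x^2 * (x*(y-x)*(y+(x+1)*c)^2 - (x+1)*(y-(x+1))*(y+x*c)^2) =
     (8 * x) + ((8 * x * v) + ((2 * x * v^2) + ((8 * x^2) + ((12 * x^2 * v) + ((3 * x^2 * v^2) + ((2 * x^3) + ((4 * x^3 * v) + ((x^3 * v^2) + ((12 * w * x) + ((8 * w * x * v) + ((w * x * v^2) + ((8 * w * x^2) + ((10 * w * x^2 * v) + ((w * x^2 * v^2) + ((w * x^3) + ((2 * w * x^3 * v) + ((6 * w^2 * x) + ((2 * w^2 * x * v) + ((2 * w^2 * x^2) + ((2 * w^2 * x^2 * v) + (w^3 * x)))))))))))))))))))))"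
    unfolding v_def w_def by (simp add: algebra_simps power2_eq_square power3_eq_cube)
  have "0 < (8 * x) + ((8 * x * v) + ((2 * x * v^2) + ((8 * x^2) + ((12 * x^2 * v) + ((3 * x^2 * v^2) + ((2 * x^3) + ((4 * x^3 * v) + ((x^3 * v^2) + ((12 * w * x) + ((8 * w * x * v) + ((w * x * v^2) + ((8 * w * x^2) + ((10 * w * x^2 * v) + ((w * x^2 * v^2) + ((w * x^3) + ((2 * w * x^3 * v) + ((6 * w^2 * x) + ((2 * w^2 * x * v) + ((2 * w^2 * x^2) + ((2 * w^2 * x^2 * v) + (w^3 * x)))))))))))))))))))))"
    using v0 w0 x0 by (intro add_pos_nonneg add_nonneg_nonneg mult_nonneg_nonneg zero_le_power mult_pos_pos) auto
  then have "0 < x^2 * (x*(y-x)*(y+(x+1)*c)^2 - (x+1)*(y-(x+1))*(y+x*c)^2)" using id by simp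
  then have "(x+1)*(y-(x+1))*(y+x*c)^2 < x*(y-x)*(y+(x+1)*c)^2"
    using x0 by (simp add: zero_less_mult_iff)
  then have "y*(x+1)*(y-(x+1))*c^2/(y+(x+1)*c)^2 < y*x*(y-x)*c^2/(y+x*c)^2"
    using T_cross[OF y0 c0, of "x+1" x] x0 by simp
  then show ?thesis unfolding T_def c_def x_def y_def by (simp add: algebra_simps)
qed

lemma Sstar_sub:
  assumes d2: "d \<ge> 2" and l: "l > 1"
  shows "Sstar d l \<subseteq> {nat \<lfloor>real d / (l + 1)\<rfloor>, nat \<lceil>real d / (l + 1)\<rceil>} \<inter> {1..d - 1}"
proof
  fix s assume sS: "s \<in> Sstar d l"
  then have s1: "1 \<le> s" "s \<le> d - 1" and Ts: "T d l s = Tstar d l" unfolding Sstar_def by auto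
  have mx: "\<And>s'. s' \<in> {1..d-1} \<Longrightarrow> T d l s' \<le> T d l s"
    unfolding Ts Tstar_def by (intro Max_ge) auto
  define q where "q = real d / (l+1)"
  have lp: "l + 1 > 0" using l by simp
  have q0: "q > 0" unfolding q_def using d2 lp by simp
  have qd: "q * (l+1) = real d" unfolding q_def using lp by simp
  have up: "real s < q + 1"
  proof (rule ccontr)
    assume "\<not> real s < q + 1"
    then have h: "real s \<ge> q + 1" by simp
    then have s2: "s \<ge> 2" using q0 by linarith
    have "real (s-1) \<ge> q" using h s2 by (simp add: of_nat_diff)
    then have "real (s-1) * (l+1) \<ge> real d" using qd lp by (metis mult_right_mono less_imp_le)
    then have "T d l (s-1+1) < T d l (s-1)" using s1 s2 l by (intro T_dec) auto
    moreover have "T d l (s-1) \<le> T d l s" using s1 s2 by (intro mx) auto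
    ultimately show False using s2 by simp
  qed
  have low: "q - 1 < real s"
  proof (rule ccontr)
    assume "\<not> q - 1 < real s"
    then have h: "real s + 1 \<le> q" by simp
    then have "(real s + 1) * (l+1) \<le> real d" using qd lp by (metis mult_right_mono less_imp_le)
    then have lt: "T d l s < T d l (s+1)" using l by (intro T_inc) auto
    have "real d * 2 < real d * (l + 1)" using l d2 by simp
    then have "q < real d / 2" unfolding q_def using lp by (simp add: field_simps)
    then have "real s + 1 < real d / 2" using h by linarith
    then have "s + 1 \<le> d - 1" by linarith
    then have "T d l (s+1) \<le> T d l s" by (intro mx) auto
    then show False using lt by simp
  qed
  have "s = nat \<lfloor>q\<rfloor> \<or> s = nat \<lceil>q\<rceil>"
  proof (cases "real s \<le> q")
    case True
    then have "\<lfloor>q\<rfloor> = int s" using low by (simp add: floor_eq_iff)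
    then show ?thesis by simp
  next
    case False
    then have "\<lceil>q\<rceil> = int s" using up by (simp add: ceiling_eq_iff)
    then show ?thesis by simp
  qed
  then show "s \<in> {nat \<lfloor>real d / (l + 1)\<rfloor>, nat \<lceil>real d / (l + 1)\<rceil>} \<inter> {1..d - 1}"
    using s1 unfolding q_def by auto
qed

locale hsetup =
  fixes H :: "real^'m^'d::{finite,linorder}"
  assumes d2: "CARD('d) \<ge> 2"
    and orth: "transpose H ** H = mat 1"
    and span: "{H *v y | y. True} = {u. (\<Sum>i\<in>UNIV. u$i) = 0}"
begin

definition aff :: "real^'m \<Rightarrow> real^'d::{finite,linorder}" where
  "aff x = ones + H *v x"

lemma sum_Hv: "(\<Sum>i\<in>UNIV. (H *v y)$i) = 0"
  using span by blast

lemma HtH: "transpose H *v (H *v x) = x"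
  by (simp only: matrix_vector_mul_assoc orth matrix_vector_mul_lid)

lemma HHt: assumes "(\<Sum>i\<in>UNIV. v$i) = 0" shows "H *v (transpose H *v v) = v"
proof -
  obtain y where "v = H *v y" using span assms by blast
  then show ?thesis by (simp only: HtH)
qed

lemma H_inj: "H *v x = H *v y \<Longrightarrow> x = y"
  by (metis HtH)

lemma gamma_dot: "gamma H i \<bullet> x = (H *v x)$i"
proof -
  have "gamma H i \<bullet> x = (axis i 1 v* H) \<bullet> x" unfolding gamma_def by simp
  also have "\<dots> = axis i 1 \<bullet> (H *v x)" by (rule dot_lmul_matrix)
  also have "\<dots> = (H *v x)$i" by (simp add: inner_axis')
  finally show ?thesis .
qed

lemma aff_nth: "aff x $ i = 1 + gamma H i \<bullet> x"
  unfolding aff_def gamma_dot ones_def by simp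

lemma sum_aff: "(\<Sum>i\<in>UNIV. aff x $ i) = real CARD('d)"
  unfolding aff_def ones_def using sum_Hv[of x] by (simp add: sum.distrib)

lemma aff_inj: "aff x = aff y \<Longrightarrow> x = y"
  unfolding aff_def by (auto intro: H_inj)

lemma norm_sq: "(norm x)^2 = (\<Sum>i\<in>UNIV. (aff x $ i - 1)^2)"
proof -
  have "(norm x)^2 = x \<bullet> x" by (simp add: power2_norm_eq_inner)
  also have "\<dots> = x \<bullet> (transpose H *v (H *v x))" by (simp only: HtH)
  also have "\<dots> = (H *v x) \<bullet> (H *v x)"
    by (metis dot_lmul_matrix inner_commute transpose_matrix_vector)
  also have "\<dots> = (\<Sum>i\<in>UNIV. ((H *v x)$i)^2)" by (simp add: inner_vec_def power2_eq_square)
  also have "\<dots> = (\<Sum>i\<in>UNIV. (aff x $ i - 1)^2)" by (simp add: aff_def ones_def)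
  finally show ?thesis .
qed

lemma norm_sq': "(norm x)^2 = (\<Sum>k\<in>UNIV. x$k * x$k)"
  by (simp add: power2_norm_eq_inner inner_vec_def)

lemma aff_xmap: assumes "(\<Sum>i\<in>UNIV. a$i) = real CARD('d)" shows "aff (xmap H a) = a"
proof -
  have "(\<Sum>i\<in>UNIV. (a - ones)$i) = 0" using assms by (simp add: ones_def sum_subtractf)
  then have "H *v (transpose H *v (a - ones)) = a - ones" by (rule HHt)
  then show ?thesis unfolding aff_def xmap_def by simp
qed

lemma perm_mv: assumes "\<pi> permutes (UNIV::'d set)"
  shows "(perm_matrix \<pi> *v w) $ i = w $ (inv \<pi> i)"
proof -
  have "(perm_matrix \<pi> *v w) $ i = (\<Sum>j\<in>UNIV. (if i = \<pi> j then 1 else 0) * w$j)"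
    unfolding perm_matrix_def by (simp add: matrix_vector_mult_def)
  also have "\<dots> = (\<Sum>j\<in>UNIV. if j = inv \<pi> i then w$j else 0)"
  proof (rule sum.cong[OF refl])
    fix j
    have "(i = \<pi> j) = (j = inv \<pi> i)" using assms
      by (metis permutes_inverses(1) permutes_inverses(2))
    then show "(if i = \<pi> j then 1 else 0) * w$j = (if j = inv \<pi> i then w$j else 0)" by simp
  qed
  also have "\<dots> = w $ (inv \<pi> i)" by simp
  finally show ?thesis .
qed

lemma sum_perm: assumes "\<pi> permutes (UNIV::'d set)"
  shows "(\<Sum>i\<in>UNIV. f (inv \<pi> i)) = (\<Sum>i\<in>UNIV. (f i :: real))"
  using sum.permute[OF permutes_inv[OF assms], of f] by (simp add: comp_def)

lemma H_Pperm: assumes "\<pi> permutes (UNIV::'d set)"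
  shows "H *v (Pperm H \<pi> *v x) = perm_matrix \<pi> *v (H *v x)"
proof -
  have s0: "(\<Sum>i\<in>UNIV. (perm_matrix \<pi> *v (H *v x))$i) = 0"
    using sum_perm[OF assms, of "\<lambda>i. (H *v x)$i"] sum_Hv[of x] by (simp add: perm_mv[OF assms])
  have "Pperm H \<pi> *v x = transpose H *v (perm_matrix \<pi> *v (H *v x))"
    unfolding Pperm_def by (simp only: matrix_vector_mul_assoc matrix_mul_assoc)
  then show ?thesis using HHt[OF s0] by simp
qed

lemma aff_Pperm: assumes "\<pi> permutes (UNIV::'d set)"
  shows "aff (Pperm H \<pi> *v x) $ i = aff x $ (inv \<pi> i)"
  unfolding aff_def using H_Pperm[OF assms] perm_mv[OF assms] by (simp add: ones_def)

lemma Pperm_comp: assumes "\<sigma> permutes (UNIV::'d set)" "\<pi> permutes (UNIV::'d set)"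
  shows "Pperm H \<sigma> *v (Pperm H \<pi> *v x) = Pperm H (\<sigma> \<circ> \<pi>) *v x"
proof (rule aff_inj, rule vec_eq_iff[THEN iffD2], rule allI)
  fix i
  have sp: "\<sigma> \<circ> \<pi> permutes UNIV" by (rule permutes_compose[OF assms(2) assms(1)])
  have "inv (\<sigma> \<circ> \<pi>) = inv \<pi> \<circ> inv \<sigma>"
    using assms by (intro o_inv_distrib) (auto simp: permutes_bij)
  then show "aff (Pperm H \<sigma> *v (Pperm H \<pi> *v x)) $ i = aff (Pperm H (\<sigma> \<circ> \<pi>) *v x) $ i"
    using aff_Pperm[OF assms(1)] aff_Pperm[OF assms(2)] aff_Pperm[OF sp] by simp
qed

lemma Pperm_id: "Pperm H id *v x = x"
proof (rule aff_inj, rule vec_eq_iff[THEN iffD2], rule allI)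
  fix i show "aff (Pperm H id *v x) $ i = aff x $ i"
    using aff_Pperm[OF permutes_id] by (simp add: inv_id)
qed

lemma norm_Pperm: assumes "\<pi> permutes (UNIV::'d set)" shows "norm (Pperm H \<pi> *v x) = norm x"
proof -
  have "(norm (Pperm H \<pi> *v x))^2 = (norm x)^2"
    unfolding norm_sq aff_Pperm[OF assms] using sum_perm[OF assms, of "\<lambda>i. (aff x $ i - 1)^2"] by simp
  then show ?thesis by (simp add: power2_eq_iff_nonneg)
qed

end

definition rk :: "'d::{finite,linorder} \<Rightarrow> nat" where "rk i = card {j. j < i}"

lemma rk_mono: fixes i i' :: "'d::{finite,linorder}" assumes "i < i'" shows "rk i < rk i'"
  unfolding rk_def using assms by (intro psubset_card_mono) auto

lemma rk_inj: "inj (rk :: 'd::{finite,linorder} \<Rightarrow> nat)"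
proof (rule injI)
  fix x y :: 'd assume "rk x = rk y"
  then show "x = y" using rk_mono[of x y] rk_mono[of y x] by (metis less_irrefl neqE)
qed

lemma rk_lt: "rk (i::'d::{finite,linorder}) < CARD('d)"
  unfolding rk_def by (intro psubset_card_mono) auto

lemma rk_range: "range (rk :: 'd::{finite,linorder} \<Rightarrow> nat) = {0..<CARD('d)}"
proof -
  have "range (rk :: 'd \<Rightarrow> nat) \<subseteq> {0..<CARD('d)}" using rk_lt by auto
  moreover have "card (range (rk :: 'd \<Rightarrow> nat)) = card {0..<CARD('d)}"
    using card_image[OF rk_inj] by simp
  ultimately show ?thesis by (intro card_subset_eq) auto
qed

lemma card_rk: assumes "s \<le> CARD('d::{finite,linorder})" shows "card {i::'d. rk i < s} = s"
proof -
  have "{i::'d. rk i < s} = rk -` {0..<s}" by auto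
  moreover have "card (rk -` {0..<s} :: 'd set) = card {0..<s}"
    using assms rk_range by (intro card_vimage_inj[OF rk_inj]) auto
  ultimately show ?thesis by simp
qed

lemma a_vec_nth:
  fixes i :: "'d::{finite,linorder}"
  shows "a_vec s lam $ i = (if rk i < s then alpha_s CARD('d) s lam else beta_s CARD('d) s lam)"
  unfolding a_vec_def rk_def by simp

lemma beta_pos: assumes "lam > 1" "d > 0" shows "beta_s d s lam > 0"
  unfolding beta_s_def using assms by (simp add: add_pos_nonneg)

lemma alpha_beta: "alpha_s d s lam = lam * beta_s d s lam" unfolding alpha_s_def ..

context hsetup begin

lemma a_vec_sums:
  assumes s: "s \<le> CARD('d)" and lam: "lam > 1"
  shows "(\<Sum>i\<in>UNIV. (a_vec s lam :: real^'d::{finite,linorder}) $ i) = real CARD('d)"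
    and "(\<Sum>i\<in>UNIV. ((a_vec s lam :: real^'d::{finite,linorder}) $ i - 1)^2) = T CARD('d) lam s"
proof -
  let ?d = "CARD('d)"
  let ?S = "{i::'d. rk i < s}"
  define al where "al = alpha_s ?d s lam"
  define be where "be = beta_s ?d s lam"
  have cs: "card ?S = s" using card_rk[OF s] .
  have cc: "card (- ?S) = ?d - s"
    unfolding Compl_eq_Diff_UNIV using cs by (subst card_Diff_subset) auto
  have gen: "(\<Sum>i\<in>UNIV. f ((a_vec s lam :: real^'d::{finite,linorder}) $ i)) = real s * f al + real (?d - s) * f be" for f :: "real \<Rightarrow> real"
  proof -
    have "(\<Sum>i\<in>UNIV. f ((a_vec s lam :: real^'d::{finite,linorder}) $ i)) = (\<Sum>i\<in>UNIV. if rk (i::'d) < s then f al else f be)"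
      by (intro sum.cong refl) (simp add: a_vec_nth al_def be_def)
    also have "\<dots> = real s * f al + real (?d - s) * f be"
      unfolding sum.If_cases[OF finite_class.finite_UNIV] using cs cc by simp
    finally show ?thesis .
  qed
  define D where "D = real ?d + real s * (lam - 1)"
  have D0: "D > 0" unfolding D_def using lam by (simp add: add_pos_nonneg)
  have be: "be = real ?d / D" unfolding be_def beta_s_def D_def ..
  have al: "al = lam * real ?d / D" unfolding al_def alpha_s_def beta_s_def D_def by simp
  have ds: "real (?d - s) = real ?d - real s" using s by (simp add: of_nat_diff)
  show "(\<Sum>i\<in>UNIV. (a_vec s lam :: real^'d::{finite,linorder}) $ i) = real ?d"
  proof -
    have "real s * al + (real ?d - real s) * be = (real s * lam * real ?d + (real ?d - real s) * real ?d) / D"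
      unfolding al be by (simp add: add_divide_distrib)
    also have "real s * lam * real ?d + (real ?d - real s) * real ?d = real ?d * D"
      unfolding D_def by (simp add: algebra_simps)
    finally have "real s * al + (real ?d - real s) * be = real ?d" using D0 by simp
    then show ?thesis using gen[of "\<lambda>x. x"] unfolding ds by simp
  qed
  have e1: "al - 1 = (lam - 1) * (real ?d - real s) / D" unfolding al using D0 by (simp add: field_simps D_def)
  have e2: "be - 1 = - (real s * (lam - 1)) / D" unfolding be using D0 by (simp add: field_simps D_def)
  have "real s * (al - 1)^2 + (real ?d - real s) * (be - 1)^2
      = (real s * (lam - 1)^2 * (real ?d - real s)^2 + (real ?d - real s) * (real s * (lam - 1))^2) / D^2"
    unfolding e1 e2 using D0 by (simp add: field_simps power2_eq_square)
  also have "\<dots> = real ?d * real s * (real ?d - real s) * (lam - 1)^2 / D^2"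
    by (simp add: algebra_simps power2_eq_square)
  finally show "(\<Sum>i\<in>UNIV. ((a_vec s lam :: real^'d::{finite,linorder}) $ i - 1)^2) = T ?d lam s"
    using gen[of "\<lambda>x. (x - 1)^2"] unfolding ds T_def D_def[symmetric] by simp
qed

end

lemma integrable_ucm:
  fixes g :: "'a \<Rightarrow> 'b::{banach, second_countable_topology}"
  assumes "finite A" shows "integrable (uniform_count_measure A) g"
  unfolding uniform_count_measure_def using integrable_point_measure_finite[OF assms, of "\<lambda>x. 1 / real (card A)" g] by simp

lemma integral_ucm:
  fixes g :: "'a \<Rightarrow> 'b::{banach, second_countable_topology}"
  assumes "finite A" shows "integral\<^sup>L (uniform_count_measure A) g = (\<Sum>a\<in>A. (1 / real (card A)) *\<^sub>R g a)"
  unfolding uniform_count_measure_def using lebesgue_integral_point_measure_finite[OF assms, of "\<lambda>x. 1 / real (card A)" g] by simp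

lemma meas_mv: "(\<lambda>x. (A::real^'n^'m) *v x) \<in> borel_measurable borel"
  by (intro borel_measurable_continuous_onI linear_continuous_on linear_conv_bounded_linear[THEN iffD1] matrix_vector_mul_linear)

locale hl = hsetup H for H :: "real^'m^'d::{finite,linorder}" +
  fixes lam :: real
  assumes lam1: "lam > 1"
begin

definition Perms :: "('d \<Rightarrow> 'd) set" where "Perms = {\<pi>. \<pi> permutes (UNIV::'d set)}"
definition U :: "('d \<Rightarrow> 'd) measure" where "U = uniform_count_measure Perms"
definition fs :: "nat \<Rightarrow> ('d \<Rightarrow> 'd) \<Rightarrow> real^'m" where "fs s \<pi> = Pperm H \<pi> *v xmap H (a_vec s lam)"
definition Orb :: "nat \<Rightarrow> (real^'m) set" where "Orb s = fs s ` Perms"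

lemma Perms_fin: "finite Perms" unfolding Perms_def by (rule finite_permutations) simp
lemma Perms_ne: "Perms \<noteq> {}" unfolding Perms_def using permutes_id by blast
lemma card_Perms_pos: "card Perms > 0" using Perms_fin Perms_ne by (simp add: card_gt_0_iff)
lemma space_U: "space U = Perms" unfolding U_def by (simp add: space_uniform_count_measure)
lemma meas_U: "g \<in> Perms \<rightarrow> space N \<Longrightarrow> g \<in> U \<rightarrow>\<^sub>M N"
  unfolding U_def by (subst measurable_cong_sets[OF sets_uniform_count_measure_count_space refl]) simp
lemma meas_fs: "fs s \<in> U \<rightarrow>\<^sub>M borel" by (rule meas_U) simp
lemma prob_U: "prob_space U" unfolding U_def using Perms_fin Perms_ne by (rule prob_space_uniform_count_measure)
lemma rho_eq: "rho_s H s lam = distr U borel (fs s)"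
  unfolding rho_s_def U_def Perms_def fs_def ..
lemma prob_rho: "prob_space (rho_s H s lam)"
  unfolding rho_eq by (rule prob_space.prob_space_distr[OF prob_U meas_fs])
lemma sets_rho: "sets (rho_s H s lam) = sets borel" unfolding rho_eq by simp
lemma space_rho: "space (rho_s H s lam) = UNIV" unfolding rho_eq by simp

lemma aff_fs: assumes "s \<le> CARD('d)" "\<pi> \<in> Perms"
  shows "aff (fs s \<pi>) $ i = a_vec s lam $ (inv \<pi> i)"
  using assms aff_Pperm[of \<pi>] aff_xmap[OF a_vec_sums(1)[OF assms(1) lam1]] unfolding fs_def Perms_def by simp

lemma norm_fs: assumes "s \<le> CARD('d)" "\<pi> \<in> Perms"
  shows "(norm (fs s \<pi>))^2 = T CARD('d) lam s"
  using assms norm_Pperm[of \<pi>] norm_sq[of "xmap H (a_vec s lam)"] aff_xmap[OF a_vec_sums(1)[OF assms(1) lam1]]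
    a_vec_sums(2)[OF assms(1) lam1] unfolding fs_def Perms_def by simp

lemma Orb_fin: "finite (Orb s)" unfolding Orb_def using Perms_fin by simp
lemma Orb_sets: "Orb s \<in> sets borel" using Orb_fin by (intro borel_closed finite_imp_closed)

lemma emeasure_orb: "emeasure (rho_s H s lam) (Orb s) = 1"
proof -
  have "emeasure (rho_s H s lam) (Orb s) = emeasure U (fs s -` Orb s \<inter> space U)"
    unfolding rho_eq by (rule emeasure_distr[OF meas_fs Orb_sets])
  also have "fs s -` Orb s \<inter> space U = space U" unfolding space_U Orb_def by auto
  also have "emeasure U (space U) = 1" using prob_U by (simp add: prob_space.emeasure_space_1)
  finally show ?thesis .
qed

lemma AE_orb: "AE x in rho_s H s lam. x \<in> Orb s"
  using prob_space.AE_prob_1[OF prob_rho] emeasure_orb by (simp add: measure_def)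

lemma integral_rho:
  fixes g :: "real^'m \<Rightarrow> 'b::{banach, second_countable_topology}"
  assumes "g \<in> borel_measurable borel"
  shows "integral\<^sup>L (rho_s H s lam) g = (\<Sum>\<pi>\<in>Perms. (1 / real (card Perms)) *\<^sub>R g (fs s \<pi>))"
  unfolding rho_eq using integral_distr[OF meas_fs assms] integral_ucm[OF Perms_fin] by (simp add: U_def)

lemma integrable_rho:
  fixes g :: "real^'m \<Rightarrow> 'b::{banach, second_countable_topology}"
  assumes "g \<in> borel_measurable borel"
  shows "integrable (rho_s H s lam) g"
  unfolding rho_eq using integrable_distr_eq[OF meas_fs assms] integrable_ucm[OF Perms_fin] by (simp add: U_def)

lemma measure_rho: assumes "A \<in> sets borel"
  shows "measure (rho_s H s lam) A = real (card {\<pi>\<in>Perms. fs s \<pi> \<in> A}) / real (card Perms)"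
proof -
  have "measure (rho_s H s lam) A = measure U (fs s -` A \<inter> space U)"
    unfolding rho_eq by (rule measure_distr[OF meas_fs assms])
  also have "fs s -` A \<inter> space U = {\<pi>\<in>Perms. fs s \<pi> \<in> A}" unfolding space_U by auto
  also have "measure U {\<pi>\<in>Perms. fs s \<pi> \<in> A} = real (card {\<pi>\<in>Perms. fs s \<pi> \<in> A}) / real (card Perms)"
    unfolding U_def by (rule measure_uniform_count_measure[OF Perms_fin]) auto
  finally show ?thesis .
qed

lemma perm_sum_indep:
  fixes g :: "'d \<Rightarrow> real"
  shows "(\<Sum>\<pi>\<in>Perms. g (inv \<pi> i)) = (\<Sum>\<pi>\<in>Perms. g (inv \<pi> k))"
proof -
  let ?t = "Transposition.transpose i k"
  have tp: "?t permutes UNIV" by (rule permutes_swap_id) auto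
  have inv: "inv (?t \<circ> \<pi>) = inv \<pi> \<circ> ?t" if p: "\<pi> \<in> Perms" for \<pi>
  proof -
    have "inv (?t \<circ> \<pi>) = inv \<pi> \<circ> inv ?t"
      using p tp unfolding Perms_def by (intro o_inv_distrib) (auto simp: permutes_bij)
    then show ?thesis by simp
  qed
  have cp: "?t \<circ> \<pi> \<in> Perms" if p: "\<pi> \<in> Perms" for \<pi>
    using p tp unfolding Perms_def by (simp add: permutes_compose)
  have inv2: "?t \<circ> (?t \<circ> \<pi>) = \<pi>" for \<pi> by (simp add: comp_assoc[symmetric])
  show ?thesis
    by (rule sum.reindex_bij_witness[of _ "\<lambda>\<pi>. ?t \<circ> \<pi>" "\<lambda>\<pi>. ?t \<circ> \<pi>"]) (auto simp: inv cp inv2)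
qed

lemma perm_sum_zero:
  fixes g :: "'d \<Rightarrow> real"
  assumes "(\<Sum>j\<in>UNIV. g j) = 0"
  shows "(\<Sum>\<pi>\<in>Perms. g (inv \<pi> i)) = 0"
proof -
  have "(\<Sum>k\<in>UNIV. \<Sum>\<pi>\<in>Perms. g (inv \<pi> k)) = (\<Sum>k\<in>(UNIV::'d set). \<Sum>\<pi>\<in>Perms. g (inv \<pi> i))"
    by (rule sum.cong[OF refl]) (rule perm_sum_indep)
  then have "real CARD('d) * (\<Sum>\<pi>\<in>Perms. g (inv \<pi> i)) = (\<Sum>k\<in>UNIV. \<Sum>\<pi>\<in>Perms. g (inv \<pi> k))"
    by simp
  also have "\<dots> = (\<Sum>\<pi>\<in>Perms. \<Sum>k\<in>UNIV. g (inv \<pi> k))" by (rule sum.swap)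
  also have "\<dots> = (\<Sum>\<pi>\<in>Perms. 0)"
    by (rule sum.cong[OF refl]) (use assms sum_perm in \<open>auto simp: Perms_def\<close>)
  finally show ?thesis by simp
qed

lemma sum_fs_zero: assumes "s \<le> CARD('d)" shows "(\<Sum>\<pi>\<in>Perms. fs s \<pi>) = 0"
proof (rule H_inj)
  have "H *v (\<Sum>\<pi>\<in>Perms. fs s \<pi>) = (\<Sum>\<pi>\<in>Perms. H *v fs s \<pi>)" by (rule vec.sum)
  also have "\<dots> = 0"
  proof (rule vec_eq_iff[THEN iffD2], rule allI)
    fix i
    have "(\<Sum>\<pi>\<in>Perms. H *v fs s \<pi>) $ i = (\<Sum>\<pi>\<in>Perms. a_vec s lam $ (inv \<pi> i) - 1)"
      unfolding sum_component
    proof (rule sum.cong[OF refl])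
      fix \<pi> assume "\<pi> \<in> Perms"
      then have "aff (fs s \<pi>) $ i = a_vec s lam $ (inv \<pi> i)" using aff_fs assms by blast
      then show "(H *v fs s \<pi>) $ i = a_vec s lam $ (inv \<pi> i) - 1" unfolding aff_def ones_def by simp
    qed
    also have "\<dots> = 0"
      using perm_sum_zero[of "\<lambda>j. a_vec s lam $ j - 1" i] a_vec_sums(1)[OF assms lam1]
      by (simp add: sum_subtractf)
    finally show "(\<Sum>\<pi>\<in>Perms. H *v fs s \<pi>) $ i = 0 $ i" by simp
  qed
  finally show "H *v (\<Sum>\<pi>\<in>Perms. fs s \<pi>) = H *v 0" by simp
qed

lemma Xd_closed: "closed (Xd H)"
  unfolding Xd_def by (intro closed_Collect_all closed_Collect_le continuous_intros)

lemma Xd_sets: "Xd H \<in> sets borel" using Xd_closed by (rule borel_closed)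

lemma a_vec_pos: "a_vec s lam $ (i::'d) > 0"
proof -
  have "beta_s CARD('d) s lam > 0" using lam1 by (intro beta_pos) auto
  then show ?thesis unfolding a_vec_nth alpha_beta using lam1 by auto
qed

lemma a_vec_ldp: "a_vec s lam $ (j::'d) \<le> lam * a_vec s lam $ (i::'d)"
proof -
  have b: "beta_s CARD('d) s lam > 0" using lam1 by (intro beta_pos) auto
  have "1 * beta_s CARD('d) s lam \<le> (lam * lam) * beta_s CARD('d) s lam"
    using lam1 b by (intro mult_right_mono) (auto simp: less_1_mult less_imp_le)
  then show ?thesis unfolding a_vec_nth alpha_beta using lam1 b by auto
qed

lemma anchored_rho: assumes "s \<le> CARD('d)" shows "anchored H (rho_s H s lam)"
  unfolding anchored_def
proof (intro conjI)
  show "prob_space (rho_s H s lam)" by (rule prob_rho)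
  show "sets (rho_s H s lam) = sets borel" by (rule sets_rho)
  have "emeasure (rho_s H s lam) (Xd H) = emeasure U (fs s -` Xd H \<inter> space U)"
    unfolding rho_eq by (rule emeasure_distr[OF meas_fs Xd_sets])
  also have "fs s -` Xd H \<inter> space U = space U"
  proof -
    have "fs s \<pi> \<in> Xd H" if "\<pi> \<in> Perms" for \<pi>
      unfolding Xd_def
    proof (clarify)
      fix i
      show "0 \<le> 1 + gamma H i \<bullet> fs s \<pi>"
        using aff_nth[of "fs s \<pi>" i, symmetric] aff_fs[OF assms that, of i] a_vec_pos[of s "inv \<pi> i"] by simp
    qed
    then show ?thesis unfolding space_U by auto
  qed
  also have "emeasure U (space U) = 1" using prob_U by (simp add: prob_space.emeasure_space_1)
  finally show "emeasure (rho_s H s lam) (Xd H) = 1" .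
  show "integrable (rho_s H s lam) (\<lambda>x. x)" by (rule integrable_rho) simp
  have "(\<integral>x. x \<partial>rho_s H s lam) = (\<Sum>\<pi>\<in>Perms. (1 / real (card Perms)) *\<^sub>R fs s \<pi>)"
    by (rule integral_rho) simp
  also have "\<dots> = (1 / real (card Perms)) *\<^sub>R (\<Sum>\<pi>\<in>Perms. fs s \<pi>)" by (simp add: scaleR_sum_right)
  also have "\<dots> = 0" using sum_fs_zero[OF assms] by simp
  finally show "(\<integral>x. x \<partial>rho_s H s lam) = 0" .
qed

end

context hl begin

lemma aff_meas: "(\<lambda>x. aff x $ i) \<in> borel_measurable borel"
  unfolding aff_nth by measurable

lemma integrable_aff:
  assumes "finite_measure M" "integrable M (\<lambda>x::real^'m. x)"
  shows "integrable M (\<lambda>x. aff x $ i)"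
  unfolding aff_nth
  by (intro Bochner_Integration.integrable_add finite_measure.integrable_const[OF assms(1)]
      integrable_inner_right assms(2))

lemma anchored_fin: "anchored H \<rho> \<Longrightarrow> finite_measure \<rho>"
  unfolding anchored_def by (auto intro: prob_space.finite_measure)

lemma AE_Xd: assumes "anchored H \<rho>" shows "AE x in \<rho>. x \<in> Xd H"
proof -
  have "prob_space \<rho>" "emeasure \<rho> (Xd H) = 1" using assms unfolding anchored_def by auto
  then show ?thesis using prob_space.AE_prob_1 by (simp add: measure_def)
qed

lemma ldp_AE:
  assumes anc: "anchored H \<rho>" and ldp: "LDP H \<epsilon> \<rho>" and lam: "lam = exp \<epsilon>"
  shows "AE x in \<rho>. \<forall>i j. aff x $ j \<le> lam * aff x $ i"
proof -
  have fin: "finite_measure \<rho>" using anc by (rule anchored_fin)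
  have sets: "sets \<rho> = sets borel" and int: "integrable \<rho> (\<lambda>x. x)" using anc unfolding anchored_def by auto
  have one: "AE x in \<rho>. aff x $ j \<le> lam * aff x $ i" for i j
  proof -
    define B where "B = {x. aff x $ j > lam * aff x $ i}"
    have Bs: "B \<in> sets borel" unfolding B_def using aff_meas by measurable
    have Bs': "B \<in> sets \<rho>" using Bs sets by simp
    have "W H \<rho> B j \<le> exp \<epsilon> * W H \<rho> B i" using ldp Bs unfolding LDP_def by blast
    then have le: "(\<integral>x. indicator B x * aff x $ j \<partial>\<rho>) \<le> lam * (\<integral>x. indicator B x * aff x $ i \<partial>\<rho>)"
      unfolding W_def set_lebesgue_integral_def lam aff_nth by simp
    have ib: "integrable \<rho> (\<lambda>x. indicator B x * aff x $ k)" for k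
      using integrable_mult_indicator[OF Bs' integrable_aff[OF fin int, of k]] by simp
    define h where "h x = indicator B x * (aff x $ j - lam * aff x $ i)" for x
    have hint: "integrable \<rho> h" unfolding h_def using ib[of j] ib[of i]
      by (simp add: algebra_simps)
    have "(\<integral>x. h x \<partial>\<rho>) = (\<integral>x. indicator B x * aff x $ j \<partial>\<rho>) - lam * (\<integral>x. indicator B x * aff x $ i \<partial>\<rho>)"
      unfolding h_def using ib[of j] ib[of i]
      by (simp add: right_diff_distrib algebra_simps)
    then have "(\<integral>x. h x \<partial>\<rho>) \<le> 0" using le by simp
    moreover have hnn: "\<And>x. 0 \<le> h x" unfolding h_def B_def by (auto simp: indicator_def)
    ultimately have "(\<integral>x. h x \<partial>\<rho>) = 0" using integral_nonneg_AE[of h \<rho>] by (simp add: antisym)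
    then have "AE x in \<rho>. h x = 0" using integral_nonneg_eq_0_iff_AE[OF hint] hnn by simp
    then show ?thesis
      by eventually_elim (auto simp: h_def B_def indicator_def split: if_splits)
  qed
  have "\<forall>i. AE x in \<rho>. \<forall>j. aff x $ j \<le> lam * aff x $ i"
    using one unfolding AE_all_countable by blast
  then show ?thesis unfolding AE_all_countable by blast
qed

lemma feasible_AE:
  assumes anc: "anchored H \<rho>" and ldp: "LDP H \<epsilon> \<rho>" and lam: "lam = exp \<epsilon>"
  shows "AE x in \<rho>. x \<in> Xd H \<and> (\<forall>i j. aff x $ j \<le> lam * aff x $ i)"
  using AE_Xd[OF anc] ldp_AE[OF assms] by eventually_elim auto

lemma pw_x:
  assumes "x \<in> Xd H" "\<forall>i j. aff x $ j \<le> lam * aff x $ i"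
  shows "(norm x)^2 \<le> Tstar CARD('d) lam"
    and "(norm x)^2 = Tstar CARD('d) lam \<Longrightarrow>
         \<exists>s\<in>Sstar CARD('d) lam. (\<forall>i. aff x $ i = alpha_s CARD('d) s lam \<or> aff x $ i = beta_s CARD('d) s lam)
             \<and> card {i. aff x $ i = alpha_s CARD('d) s lam} = s"
proof -
  have nn: "\<forall>i. 0 \<le> aff x $ i" using assms(1) unfolding Xd_def aff_nth by auto
  note P = pw[of lam "\<lambda>i. aff x $ i", OF lam1 d2 sum_aff nn assms(2)]
  show "(norm x)^2 \<le> Tstar CARD('d) lam" unfolding norm_sq using P(1) .
  assume "(norm x)^2 = Tstar CARD('d) lam"
  then show "\<exists>s\<in>Sstar CARD('d) lam. (\<forall>i. aff x $ i = alpha_s CARD('d) s lam \<or> aff x $ i = beta_s CARD('d) s lam)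
             \<and> card {i. aff x $ i = alpha_s CARD('d) s lam} = s"
    unfolding norm_sq using P(2) by blast
qed

lemma trace_eq:
  assumes prob: "prob_space \<rho>" and sets: "sets \<rho> = sets borel"
    and bnd: "AE x in \<rho>. (norm x)^2 \<le> C"
  shows "integrable \<rho> (\<lambda>x::real^'m. (norm x)^2)" and "trace (Sigma_mat \<rho>) = (\<integral>x. (norm x)^2 \<partial>\<rho>)"
proof -
  interpret prob_space \<rho> by (rule prob)
  have ik: "integrable \<rho> (\<lambda>x::real^'m. x$k * x$k)" for k
  proof (rule integrable_const_bound[where B=C])
    show "AE x in \<rho>. norm (x$k * x$k) \<le> C"
      using bnd
    proof eventually_elim
      case (elim x)
      have "\<bar>x$k\<bar> \<le> norm x" by (rule component_le_norm_cart)
      then have "\<bar>x$k\<bar> * \<bar>x$k\<bar> \<le> norm x * norm x" by (intro mult_mono) auto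
      then show ?case using elim by (simp add: abs_mult power2_eq_square)
    qed
    show "(\<lambda>x::real^'m. x$k * x$k) \<in> borel_measurable \<rho>"
      by (subst measurable_cong_sets[OF sets refl]) measurable
  qed
  show "integrable \<rho> (\<lambda>x::real^'m. (norm x)^2)"
    unfolding norm_sq' using Bochner_Integration.integrable_sum[where I=UNIV and M=\<rho> and f="\<lambda>k x. x$k * x$k"] ik by simp
  have "trace (Sigma_mat \<rho>) = (\<Sum>k\<in>UNIV. \<integral>x. x$k * x$k \<partial>\<rho>)"
    unfolding trace_def by (intro sum.cong refl) (simp add: Sigma_mat_def)
  also have "\<dots> = (\<integral>x. (\<Sum>k\<in>UNIV. x$k * x$k) \<partial>\<rho>)"
    using Bochner_Integration.integral_sum[where I=UNIV and M=\<rho> and f="\<lambda>k x. x$k * x$k"] ik by simp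
  finally show "trace (Sigma_mat \<rho>) = (\<integral>x. (norm x)^2 \<partial>\<rho>)" unfolding norm_sq' .
qed
lemma feasible_bound:
  assumes anc: "anchored H \<rho>" and ldp: "LDP H \<epsilon> \<rho>" and lam: "lam = exp \<epsilon>"
  shows "AE x in \<rho>. (norm x)^2 \<le> Tstar CARD('d) lam"
    and "trace (Sigma_mat \<rho>) \<le> Tstar CARD('d) lam"
proof -
  show bnd: "AE x in \<rho>. (norm x)^2 \<le> Tstar CARD('d) lam"
    using feasible_AE[OF assms] by eventually_elim (auto intro: pw_x)
  have prob: "prob_space \<rho>" and sets: "sets \<rho> = sets borel" using anc unfolding anchored_def by auto
  interpret prob_space \<rho> by (rule prob)
  note TE = trace_eq[OF prob sets bnd]
  have "(\<integral>x. (norm x)^2 \<partial>\<rho>) \<le> (\<integral>x. Tstar CARD('d) lam \<partial>\<rho>)"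
    using TE(1) bnd by (intro integral_mono_AE) auto
  then show "trace (Sigma_mat \<rho>) \<le> Tstar CARD('d) lam" using TE(2) by (simp add: prob_space)
qed

lemma feasible_eq_AE:
  assumes anc: "anchored H \<rho>" and ldp: "LDP H \<epsilon> \<rho>" and lam: "lam = exp \<epsilon>"
    and tr: "trace (Sigma_mat \<rho>) = Tstar CARD('d) lam"
  shows "AE x in \<rho>. (norm x)^2 = Tstar CARD('d) lam"
proof -
  note bnd = feasible_bound(1)[OF anc ldp lam]
  have prob: "prob_space \<rho>" and sets: "sets \<rho> = sets borel" using anc unfolding anchored_def by auto
  interpret prob_space \<rho> by (rule prob)
  note TE = trace_eq[OF prob sets bnd]
  have int: "integrable \<rho> (\<lambda>x. Tstar CARD('d) lam - (norm x)^2)" using TE(1) by simp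
  have "(\<integral>x. Tstar CARD('d) lam - (norm x)^2 \<partial>\<rho>) = 0"
    using TE tr by (simp add: Bochner_Integration.integral_diff prob_space)
  then have "AE x in \<rho>. Tstar CARD('d) lam - (norm x)^2 = 0"
    using integral_nonneg_eq_0_iff_AE[OF int] bnd by simp
  then show ?thesis by eventually_elim simp
qed

lemma LDP_of_AE:
  fixes \<rho> :: "(real^'m) measure"
  assumes prob: "prob_space \<rho>" and sets: "sets \<rho> = sets borel" and int: "integrable \<rho> (\<lambda>x. x)"
    and ae: "AE x in \<rho>. \<forall>i j. aff x $ j \<le> lam * aff x $ i" and lam: "lam = exp \<epsilon>"
  shows "LDP H \<epsilon> \<rho>"
  unfolding LDP_def
proof (intro ballI allI)
  fix B :: "(real^'m) set" and i j assume Bs: "B \<in> sets borel"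
  have fin: "finite_measure \<rho>" using prob by (rule prob_space.finite_measure)
  have ib: "integrable \<rho> (\<lambda>x. indicator B x * aff x $ k)" for k
    using integrable_mult_indicator[of B \<rho>, OF _ integrable_aff[OF fin int, of k]] Bs sets by simp
  have "(\<integral>x. indicator B x * aff x $ j \<partial>\<rho>) \<le> (\<integral>x. lam * (indicator B x * aff x $ i) \<partial>\<rho>)"
    using ib[of j] ib[of i] ae
    by (intro integral_mono_AE) (auto elim!: eventually_mono simp: indicator_def)
  also have "\<dots> = lam * (\<integral>x. indicator B x * aff x $ i \<partial>\<rho>)" by simp
  finally show "W H \<rho> B j \<le> exp \<epsilon> * W H \<rho> B i"
    unfolding W_def set_lebesgue_integral_def lam aff_nth by simp
qed

lemma LDP_rho: assumes "s \<le> CARD('d)" "lam = exp \<epsilon>" shows "LDP H \<epsilon> (rho_s H s lam)"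
proof (rule LDP_of_AE[OF prob_rho sets_rho _ _ assms(2)])
  show "integrable (rho_s H s lam) (\<lambda>x. x)" by (rule integrable_rho) simp
  show "AE x in rho_s H s lam. \<forall>i j. aff x $ j \<le> lam * aff x $ i"
    using AE_orb
  proof eventually_elim
    case (elim x)
    then obtain \<pi> where p: "\<pi> \<in> Perms" "x = fs s \<pi>" unfolding Orb_def by auto
    show ?case using aff_fs[OF assms(1) p(1)] a_vec_ldp p(2) by simp
  qed
qed

lemma trace_rho: assumes "s \<le> CARD('d)" shows "trace (Sigma_mat (rho_s H s lam)) = T CARD('d) lam s"
proof -
  have ae: "AE x in rho_s H s lam. (norm x)^2 = T CARD('d) lam s"
    using AE_orb by eventually_elim (auto simp: Orb_def norm_fs[OF assms])
  then have bnd: "AE x in rho_s H s lam. (norm x)^2 \<le> T CARD('d) lam s" by eventually_elim simp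
  note TE = trace_eq[OF prob_rho sets_rho bnd]
  interpret prob_space "rho_s H s lam" by (rule prob_rho)
  have m: "(\<lambda>x::real^'m. (norm x)^2) \<in> borel_measurable (rho_s H s lam)"
    by (subst measurable_cong_sets[OF sets_rho refl]) measurable
  have "(\<integral>x. (norm x)^2 \<partial>rho_s H s lam) = (\<integral>x. T CARD('d) lam s \<partial>rho_s H s lam)"
    using ae m by (intro integral_cong_AE) auto
  then show ?thesis using TE(2) by (simp add: prob_space)
qed

end

context hl begin

lemma perm_exists:
  fixes a :: "real^'d::{finite,linorder}"
  assumes s: "s \<le> CARD('d)" and vals: "\<forall>i. a$i = al \<or> a$i = be" and ne: "al \<noteq> be"
    and cs: "card {i. a$i = al} = s"
  shows "\<exists>\<pi>\<in>Perms. \<forall>i. a$i = (if rk (inv \<pi> i) < s then al else be)"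
proof -
  define R where "R = {i::'d. rk i < s}"
  define I where "I = {i. a$i = al}"
  have cR: "card R = s" unfolding R_def using card_rk[OF s] .
  have cI: "card I = s" unfolding I_def using cs .
  obtain f where f: "bij_betw f R I" using finite_same_card_bij[of R I] cR cI by auto
  have cR': "card (- R) = CARD('d) - s"
    unfolding Compl_eq_Diff_UNIV using cR by (subst card_Diff_subset) auto
  have cI': "card (- I) = CARD('d) - s"
    unfolding Compl_eq_Diff_UNIV using cI by (subst card_Diff_subset) auto
  obtain g where g: "bij_betw g (- R) (- I)" using finite_same_card_bij[of "- R" "- I"] cR' cI' by auto
  define \<pi> where "\<pi> i = (if i \<in> R then f i else g i)" for i
  have b1: "bij_betw \<pi> R I" using f unfolding \<pi>_def by (rule bij_betw_cong[THEN iffD1, rotated]) auto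
  have b2: "bij_betw \<pi> (- R) (- I)" using g unfolding \<pi>_def by (rule bij_betw_cong[THEN iffD1, rotated]) auto
  have "bij_betw \<pi> (R \<union> - R) (I \<union> - I)" by (rule bij_betw_combine[OF b1 b2]) auto
  then have bij: "bij_betw \<pi> UNIV UNIV" by simp
  then have pp: "\<pi> permutes UNIV" by (intro bij_imp_permutes) auto
  have "a$i = (if rk (inv \<pi> i) < s then al else be)" for i
  proof -
    have ii: "\<pi> (inv \<pi> i) = i" using pp by (simp add: permutes_inverses(1))
    show ?thesis
    proof (cases "inv \<pi> i \<in> R")
      case True
      then have "\<pi> (inv \<pi> i) \<in> I" using b1 by (auto simp: bij_betw_def)
      then show ?thesis using True ii unfolding I_def R_def by auto
    next
      case False
      then have "\<pi> (inv \<pi> i) \<in> - I" using b2 by (auto simp: bij_betw_def)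
      then show ?thesis using False ii vals unfolding I_def R_def by auto
    qed
  qed
  then show ?thesis using pp unfolding Perms_def by blast
qed

lemma in_Orb:
  assumes s: "s \<le> CARD('d)"
    and vals: "\<forall>i. aff x $ i = alpha_s CARD('d) s lam \<or> aff x $ i = beta_s CARD('d) s lam"
    and cs: "card {i. aff x $ i = alpha_s CARD('d) s lam} = s"
  shows "x \<in> Orb s"
proof -
  have b: "beta_s CARD('d) s lam > 0" using lam1 by (intro beta_pos) auto
  then have ne: "alpha_s CARD('d) s lam \<noteq> beta_s CARD('d) s lam" unfolding alpha_beta using lam1 by simp
  obtain \<pi> where p: "\<pi> \<in> Perms"
    and e: "\<forall>i. aff x $ i = (if rk (inv \<pi> i) < s then alpha_s CARD('d) s lam else beta_s CARD('d) s lam)"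
    using perm_exists[OF s vals ne cs] by blast
  have "aff x = aff (fs s \<pi>)"
    by (rule vec_eq_iff[THEN iffD2]) (simp add: e aff_fs[OF s p] a_vec_nth)
  then have "x = fs s \<pi>" by (rule aff_inj)
  then show ?thesis unfolding Orb_def using p by blast
qed

definition OS :: "(real^'m) set" where "OS = (\<Union>s\<in>Sstar CARD('d) lam. Orb s)"

lemma Sstar_fin: "finite (Sstar CARD('d) lam)" unfolding Sstar_def by simp
lemma Sstar_range: "s \<in> Sstar CARD('d) lam \<Longrightarrow> 1 \<le> s \<and> s < CARD('d)"
  unfolding Sstar_def using d2 by auto
lemma OS_sets: "OS \<in> sets borel"
  unfolding OS_def using Sstar_fin Orb_sets by (intro sets.finite_UN) auto

lemma feasible_OS:
  assumes anc: "anchored H \<rho>" and ldp: "LDP H \<epsilon> \<rho>" and lam: "lam = exp \<epsilon>"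
    and tr: "trace (Sigma_mat \<rho>) = Tstar CARD('d) lam"
  shows "AE x in \<rho>. x \<in> OS"
  using feasible_AE[OF anc ldp lam] feasible_eq_AE[OF assms]
proof eventually_elim
  case (elim x)
  then obtain s where s: "s \<in> Sstar CARD('d) lam"
    and v: "\<forall>i. aff x $ i = alpha_s CARD('d) s lam \<or> aff x $ i = beta_s CARD('d) s lam"
    and c: "card {i. aff x $ i = alpha_s CARD('d) s lam} = s"
    using pw_x(2)[of x] by blast
  have "x \<in> Orb s" using in_Orb[OF _ v c] Sstar_range[OF s] by simp
  then show ?case unfolding OS_def using s by blast
qed

lemma a_vec_ge_beta: "a_vec s lam $ (i::'d) \<ge> beta_s CARD('d) s lam"
proof -
  have "beta_s CARD('d) s lam > 0" using lam1 by (intro beta_pos) auto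
  then show ?thesis unfolding a_vec_nth alpha_beta using lam1 by auto
qed

lemma Orb_beta: assumes "s < CARD('d)" "x \<in> Orb s"
  shows "\<forall>i. aff x $ i \<ge> beta_s CARD('d) s lam" and "\<exists>i. aff x $ i = beta_s CARD('d) s lam"
proof -
  obtain \<pi> where p: "\<pi> \<in> Perms" "x = fs s \<pi>" using assms(2) unfolding Orb_def by auto
  show "\<forall>i. aff x $ i \<ge> beta_s CARD('d) s lam" using aff_fs[of s \<pi>] p assms(1) a_vec_ge_beta by simp
  obtain j :: 'd where j: "rk j = s" using rk_range assms(1) by (metis atLeastLessThan_iff rangeE zero_le)
  have "inv \<pi> (\<pi> j) = j" using p(1) unfolding Perms_def by (simp add: permutes_inverses(2))
  then have "aff x $ (\<pi> j) = beta_s CARD('d) s lam" using aff_fs[of s \<pi> "\<pi> j"] p assms(1) j by (simp add: a_vec_nth)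
  then show "\<exists>i. aff x $ i = beta_s CARD('d) s lam" by blast
qed

lemma beta_inj: assumes "beta_s CARD('d) s lam = beta_s CARD('d) r lam" shows "s = r"
proof -
  have "real CARD('d) + real s * (lam - 1) > 0" "real CARD('d) + real r * (lam - 1) > 0"
    using lam1 by (simp_all add: add_pos_nonneg)
  then have "real CARD('d) + real s * (lam - 1) = real CARD('d) + real r * (lam - 1)"
    using assms unfolding beta_s_def by (simp add: field_simps)
  then show ?thesis using lam1 by simp
qed

lemma Orb_disj: assumes "s < CARD('d)" "r < CARD('d)" "x \<in> Orb s" "x \<in> Orb r" shows "s = r"
proof -
  obtain i where i: "aff x $ i = beta_s CARD('d) s lam" using Orb_beta(2)[OF assms(1,3)] by blast
  obtain j where j: "aff x $ j = beta_s CARD('d) r lam" using Orb_beta(2)[OF assms(2,4)] by blast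
  have "beta_s CARD('d) s lam \<ge> beta_s CARD('d) r lam" using i Orb_beta(1)[OF assms(2,4)] by metis
  moreover have "beta_s CARD('d) r lam \<ge> beta_s CARD('d) s lam" using j Orb_beta(1)[OF assms(1,3)] by metis
  ultimately show ?thesis using beta_inj by (metis order_antisym)
qed

lemma measure_rho_Orb: assumes "s < CARD('d)" "r < CARD('d)"
  shows "measure (rho_s H s lam) (Orb r) = (if s = r then 1 else 0)"
proof (cases "s = r")
  case True
  then show ?thesis using emeasure_orb[of s] by (simp add: measure_def)
next
  case False
  have "{\<pi>\<in>Perms. fs s \<pi> \<in> Orb r} = {}"
    using Orb_disj[OF assms] False unfolding Orb_def by blast
  then show ?thesis using measure_rho[OF Orb_sets, of s r] False by simp
qed

lemma measure_eq_borel: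
  assumes "prob_space \<mu>" "prob_space \<nu>" "sets \<mu> = sets borel" "sets \<nu> = sets borel"
    and "\<forall>A\<in>sets borel. measure \<mu> A = measure \<nu> A"
  shows "\<mu> = \<nu>"
proof (rule measure_eqI)
  show "sets \<mu> = sets \<nu>" using assms by simp
  fix A assume "A \<in> sets \<mu>"
  then have "A \<in> sets borel" using assms by simp
  then show "emeasure \<mu> A = emeasure \<nu> A"
    using assms finite_measure.emeasure_eq_measure[OF prob_space.finite_measure[OF assms(1)]]
      finite_measure.emeasure_eq_measure[OF prob_space.finite_measure[OF assms(2)]] by simp
qed

lemma exch_rho: assumes s: "s \<le> CARD('d)" shows "exchangeable H (rho_s H s lam)"
  unfolding exchangeable_def
proof (intro allI impI)
  fix \<sigma> :: "'d \<Rightarrow> 'd" assume sp: "\<sigma> permutes UNIV"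
  have mP: "(\<lambda>x. Pperm H \<sigma> *v x) \<in> rho_s H s lam \<rightarrow>\<^sub>M borel"
    by (subst measurable_cong_sets[OF sets_rho refl]) (rule meas_mv)
  interpret P1: prob_space "distr (rho_s H s lam) borel (\<lambda>x. Pperm H \<sigma> *v x)"
    by (rule prob_space.prob_space_distr[OF prob_rho mP])
  show "distr (rho_s H s lam) borel (\<lambda>x. Pperm H \<sigma> *v x) = rho_s H s lam"
  proof (rule measure_eq_borel[OF P1.prob_space_axioms prob_rho _ sets_rho], simp, intro ballI)
    fix A :: "(real^'m) set" assume A: "A \<in> sets borel"
    have A': "(\<lambda>x. Pperm H \<sigma> *v x) -` A \<in> sets borel" using meas_mv A by (auto simp: measurable_def)
    have "measure (distr (rho_s H s lam) borel (\<lambda>x. Pperm H \<sigma> *v x)) A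
        = measure (rho_s H s lam) ((\<lambda>x. Pperm H \<sigma> *v x) -` A \<inter> space (rho_s H s lam))"
      by (rule measure_distr[OF mP A])
    also have "\<dots> = real (card {\<pi>\<in>Perms. fs s \<pi> \<in> (\<lambda>x. Pperm H \<sigma> *v x) -` A}) / real (card Perms)"
      using measure_rho[OF A'] by (simp add: space_rho)
    also have "card {\<pi>\<in>Perms. fs s \<pi> \<in> (\<lambda>x. Pperm H \<sigma> *v x) -` A} = card {\<pi>\<in>Perms. fs s \<pi> \<in> A}"
    proof (rule bij_betw_same_card[of "\<lambda>\<pi>. \<sigma> \<circ> \<pi>"], rule bij_betw_byWitness[of _ "\<lambda>\<pi>. inv \<sigma> \<circ> \<pi>"])
      show "\<forall>\<pi>\<in>{\<pi> \<in> Perms. fs s \<pi> \<in> (*v) (Pperm H \<sigma>) -` A}. inv \<sigma> \<circ> (\<sigma> \<circ> \<pi>) = \<pi>"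
        using sp by (simp add: comp_assoc[symmetric] permutes_inv_o(2))
      show "\<forall>\<pi>\<in>{\<pi> \<in> Perms. fs s \<pi> \<in> A}. \<sigma> \<circ> (inv \<sigma> \<circ> \<pi>) = \<pi>"
        using sp by (simp add: comp_assoc[symmetric] permutes_inv_o(1))
      show "(\<circ>) \<sigma> ` {\<pi> \<in> Perms. fs s \<pi> \<in> (*v) (Pperm H \<sigma>) -` A} \<subseteq> {\<pi> \<in> Perms. fs s \<pi> \<in> A}"
        using sp unfolding Perms_def fs_def by (auto simp: Pperm_comp permutes_compose)
      show "(\<circ>) (inv \<sigma>) ` {\<pi> \<in> Perms. fs s \<pi> \<in> A} \<subseteq> {\<pi> \<in> Perms. fs s \<pi> \<in> (*v) (Pperm H \<sigma>) -` A}"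
      proof
        fix \<tau> assume "\<tau> \<in> (\<circ>) (inv \<sigma>) ` {\<pi> \<in> Perms. fs s \<pi> \<in> A}"
        then obtain \<pi> where pi: "\<pi> \<in> Perms" "fs s \<pi> \<in> A" "\<tau> = inv \<sigma> \<circ> \<pi>" by auto
        have ip: "inv \<sigma> permutes UNIV" using sp by (rule permutes_inv)
        have tp: "\<tau> \<in> Perms" using pi ip unfolding Perms_def by (simp add: permutes_compose)
        have "Pperm H \<sigma> *v fs s \<tau> = fs s (\<sigma> \<circ> \<tau>)"
          using tp sp unfolding fs_def Perms_def by (simp add: Pperm_comp)
        also have "\<sigma> \<circ> \<tau> = \<pi>" using pi(3) sp by (simp add: comp_assoc[symmetric] permutes_inv_o(1))
        finally have "Pperm H \<sigma> *v fs s \<tau> = fs s \<pi>" .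
        then have "Pperm H \<sigma> *v fs s \<tau> \<in> A" using pi(2) by simp
        then show "\<tau> \<in> {\<pi> \<in> Perms. fs s \<pi> \<in> (*v) (Pperm H \<sigma>) -` A}" using tp by simp
      qed
    qed
    also have "real (card {\<pi>\<in>Perms. fs s \<pi> \<in> A}) / real (card Perms) = measure (rho_s H s lam) A"
      using measure_rho[OF A] by simp
    finally show "measure (distr (rho_s H s lam) borel (\<lambda>x. Pperm H \<sigma> *v x)) A = measure (rho_s H s lam) A" .
  qed
qed

end

context hl begin

lemma sum_perm_indicator:
  assumes s: "s \<le> CARD('d)" and sp: "\<sigma> \<in> Perms"
  shows "(\<Sum>\<pi>\<in>Perms. indicator A (Pperm H \<pi> *v fs s \<sigma>) :: real) = real (card {\<pi>\<in>Perms. fs s \<pi> \<in> A})"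
proof -
  have sp': "\<sigma> permutes UNIV" using sp unfolding Perms_def by simp
  have "(\<Sum>\<pi>\<in>Perms. indicator A (Pperm H \<pi> *v fs s \<sigma>) :: real) = (\<Sum>\<pi>\<in>Perms. indicator A (fs s (\<pi> \<circ> \<sigma>)))"
    by (rule sum.cong[OF refl]) (use sp' in \<open>simp add: fs_def Pperm_comp Perms_def\<close>)
  also have "\<dots> = (\<Sum>\<pi>\<in>Perms. indicator A (fs s \<pi>))"
  proof (rule sum.reindex_bij_witness[of _ "\<lambda>\<pi>. \<pi> \<circ> inv \<sigma>" "\<lambda>\<pi>. \<pi> \<circ> \<sigma>"])
    fix \<pi> assume p: "\<pi> \<in> Perms"
    show "\<pi> \<circ> \<sigma> \<circ> inv \<sigma> = \<pi>" using sp' by (simp add: comp_assoc permutes_inv_o(1))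
    show "\<pi> \<circ> \<sigma> \<in> Perms" using p sp' unfolding Perms_def by (simp add: permutes_compose)
    show "\<pi> \<circ> inv \<sigma> \<circ> \<sigma> = \<pi>" using sp' by (simp add: comp_assoc permutes_inv_o(2))
    show "\<pi> \<circ> inv \<sigma> \<in> Perms" using p sp' unfolding Perms_def by (simp add: permutes_compose permutes_inv)
    show "indicator A (fs s (\<pi> \<circ> \<sigma>)) = indicator A (fs s (\<pi> \<circ> \<sigma>))" ..
  qed
  also have "\<dots> = real (card {\<pi>\<in>Perms. fs s \<pi> \<in> A})"
    by (simp add: indicator_def Int_def)
  finally show ?thesis .
qed

lemma exch_decomp:
  assumes anc: "anchored H \<rho>" and ex: "exchangeable H \<rho>" and ae: "AE x in \<rho>. x \<in> OS"
    and A: "A \<in> sets borel"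
  shows "measure \<rho> A = (\<Sum>s\<in>Sstar CARD('d) lam. measure \<rho> (Orb s) * measure (rho_s H s lam) A)"
proof -
  have prob: "prob_space \<rho>" and sets: "sets \<rho> = sets borel" using anc unfolding anchored_def by auto
  have fin: "finite_measure \<rho>" using prob by (rule prob_space.finite_measure)
  have space: "space \<rho> = UNIV" using sets_eq_imp_space_eq[OF sets] by simp
  have mb: "f \<in> borel_measurable \<rho>" if "f \<in> borel_measurable borel" for f :: "real^'m \<Rightarrow> real"
    by (subst measurable_cong_sets[OF sets refl]) (rule that)
  have mi: "(\<lambda>x. indicator A (Pperm H \<pi> *v x) :: real) \<in> borel_measurable borel" for \<pi>
    by (rule measurable_compose[OF meas_mv borel_measurable_indicator[OF A]])
  have mo: "(\<lambda>x. indicator (Orb s) x :: real) \<in> borel_measurable borel" for s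
    by (rule borel_measurable_indicator[OF Orb_sets])
  have inti: "integrable \<rho> (\<lambda>x. indicator A (Pperm H \<pi> *v x) :: real)" for \<pi>
    by (rule finite_measure.integrable_const_bound[OF fin, where B=1, OF _ mb[OF mi]]) (simp add: indicator_def)
  have into: "integrable \<rho> (\<lambda>x. indicator (Orb s) x :: real)" for s
    by (rule finite_measure.integrable_const_bound[OF fin, where B=1, OF _ mb[OF mo]]) (simp add: indicator_def)
  define n where "n = real (card Perms)"
  have n0: "n > 0" unfolding n_def using card_Perms_pos by simp
  define m where "m s = measure (rho_s H s lam) A" for s
  have m1: "measure \<rho> A = (\<integral>x. indicator A (Pperm H \<pi> *v x) \<partial>\<rho>)" if p: "\<pi> \<in> Perms" for \<pi>
  proof -
    have mP: "(\<lambda>x. Pperm H \<pi> *v x) \<in> \<rho> \<rightarrow>\<^sub>M borel"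
      by (subst measurable_cong_sets[OF sets refl]) (rule meas_mv)
    have "distr \<rho> borel (\<lambda>x. Pperm H \<pi> *v x) = \<rho>" using ex p unfolding exchangeable_def Perms_def by simp
    then have "measure \<rho> A = measure (distr \<rho> borel (\<lambda>x. Pperm H \<pi> *v x)) A" by simp
    also have "\<dots> = measure \<rho> ((\<lambda>x. Pperm H \<pi> *v x) -` A \<inter> space \<rho>)" by (rule measure_distr[OF mP A])
    also have "\<dots> = (\<integral>x. indicator ((\<lambda>x. Pperm H \<pi> *v x) -` A) x \<partial>\<rho>)" by (simp add: integral_indicator)
    also have "\<dots> = (\<integral>x. indicator A (Pperm H \<pi> *v x) \<partial>\<rho>)" by (simp add: indicator_def)
    finally show ?thesis .
  qed
  have "n * measure \<rho> A = (\<Sum>\<pi>\<in>Perms. measure \<rho> A)" unfolding n_def by simp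
  also have "\<dots> = (\<Sum>\<pi>\<in>Perms. \<integral>x. indicator A (Pperm H \<pi> *v x) \<partial>\<rho>)"
    by (rule sum.cong[OF refl]) (rule m1)
  also have "\<dots> = (\<integral>x. (\<Sum>\<pi>\<in>Perms. indicator A (Pperm H \<pi> *v x)) \<partial>\<rho>)"
    using Bochner_Integration.integral_sum[where I=Perms and M=\<rho> and f="\<lambda>\<pi> x. indicator A (Pperm H \<pi> *v x) :: real"] inti
    by simp
  also have "\<dots> = (\<integral>x. (\<Sum>s\<in>Sstar CARD('d) lam. (n * m s) * indicator (Orb s) x) \<partial>\<rho>)"
  proof (rule integral_cong_AE)
    show "(\<lambda>x. \<Sum>\<pi>\<in>Perms. indicator A (Pperm H \<pi> *v x) :: real) \<in> borel_measurable \<rho>"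
      by (rule borel_measurable_sum) (rule mb[OF mi])
    show "(\<lambda>x. \<Sum>s\<in>Sstar CARD('d) lam. (n * m s) * indicator (Orb s) x :: real) \<in> borel_measurable \<rho>"
      by (rule borel_measurable_sum, rule borel_measurable_times, rule borel_measurable_const, rule mb[OF mo])
    show "AE x in \<rho>. (\<Sum>\<pi>\<in>Perms. indicator A (Pperm H \<pi> *v x)) = (\<Sum>s\<in>Sstar CARD('d) lam. (n * m s) * indicator (Orb s) x)"
      using ae
    proof eventually_elim
      case (elim x)
      then obtain s0 where s0: "s0 \<in> Sstar CARD('d) lam" "x \<in> Orb s0" unfolding OS_def by auto
      then obtain \<sigma> where sg: "\<sigma> \<in> Perms" "x = fs s0 \<sigma>" unfolding Orb_def by auto
      have r0: "s0 < CARD('d)" using Sstar_range[OF s0(1)] by simp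
      have "(\<Sum>\<pi>\<in>Perms. indicator A (Pperm H \<pi> *v x) :: real) = real (card {\<pi>\<in>Perms. fs s0 \<pi> \<in> A})"
        using sum_perm_indicator[of s0 \<sigma> A] sg r0 by simp
      also have "\<dots> = n * m s0" unfolding m_def n_def using measure_rho[OF A, of s0] n0 unfolding n_def by simp
      also have "\<dots> = (\<Sum>s\<in>Sstar CARD('d) lam. (n * m s) * indicator (Orb s) x)"
      proof -
        have "(\<Sum>s\<in>Sstar CARD('d) lam. (n * m s) * indicator (Orb s) x) = (\<Sum>s\<in>Sstar CARD('d) lam. if s = s0 then n * m s else 0)"
        proof (rule sum.cong[OF refl])
          fix s assume s: "s \<in> Sstar CARD('d) lam"
          have "x \<in> Orb s \<longleftrightarrow> s = s0" using Orb_disj[of s s0 x] Sstar_range[OF s] r0 s0(2) by auto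
          then show "(n * m s) * indicator (Orb s) x = (if s = s0 then n * m s else 0)" by (simp add: indicator_def)
        qed
        also have "\<dots> = n * m s0" using s0(1) Sstar_fin by (simp add: sum.delta)
        finally show ?thesis by simp
      qed
      finally show ?case .
    qed
  qed
  also have "\<dots> = (\<Sum>s\<in>Sstar CARD('d) lam. \<integral>x. (n * m s) * indicator (Orb s) x \<partial>\<rho>)"
    using Bochner_Integration.integral_sum[where I="Sstar CARD('d) lam" and M=\<rho> and f="\<lambda>s x. (n * m s) * indicator (Orb s) x :: real"] into
    by simp
  also have "\<dots> = (\<Sum>s\<in>Sstar CARD('d) lam. (n * m s) * measure \<rho> (Orb s))"
    by (rule sum.cong[OF refl]) (simp add: integral_indicator space)
  also have "\<dots> = n * (\<Sum>s\<in>Sstar CARD('d) lam. measure \<rho> (Orb s) * m s)"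
    by (simp add: sum_distrib_left algebra_simps)
  finally show ?thesis using n0 unfolding m_def by simp
qed

end

context hl begin

lemma Tstar_S: "s \<in> Sstar CARD('d) lam \<Longrightarrow> T CARD('d) lam s = Tstar CARD('d) lam"
  unfolding Sstar_def by simp

lemma rho_good:
  assumes s: "s \<in> Sstar CARD('d) lam" and lam: "lam = exp \<epsilon>"
  shows "anchored H (rho_s H s lam)" "LDP H \<epsilon> (rho_s H s lam)" "exchangeable H (rho_s H s lam)"
    "trace (Sigma_mat (rho_s H s lam)) = Tstar CARD('d) lam"
proof -
  have sd: "s \<le> CARD('d)" using Sstar_range[OF s] by simp
  show "anchored H (rho_s H s lam)" by (rule anchored_rho[OF sd])
  show "LDP H \<epsilon> (rho_s H s lam)" by (rule LDP_rho[OF sd lam])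
  show "exchangeable H (rho_s H s lam)" by (rule exch_rho[OF sd])
  show "trace (Sigma_mat (rho_s H s lam)) = Tstar CARD('d) lam" using trace_rho[OF sd] Tstar_S[OF s] by simp
qed

lemma OS_rho: assumes s: "s \<in> Sstar CARD('d) lam" shows "measure (rho_s H s lam) OS = 1"
proof -
  interpret prob_space "rho_s H s lam" by (rule prob_rho)
  have "Orb s \<subseteq> OS" unfolding OS_def using s by blast
  then have "measure (rho_s H s lam) (Orb s) \<le> measure (rho_s H s lam) OS"
    using OS_sets sets_rho by (intro finite_measure_mono) auto
  moreover have "measure (rho_s H s lam) (Orb s) = 1" using emeasure_orb[of s] by (simp add: measure_def)
  moreover have "measure (rho_s H s lam) OS \<le> 1" by (rule prob_le_1)
  ultimately show ?thesis by simp
qed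

lemma mix_trace:
  assumes anc: "anchored H \<rho>"
    and c: "\<forall>s\<in>Sstar CARD('d) lam. c s \<ge> 0" "(\<Sum>s\<in>Sstar CARD('d) lam. c s) = 1"
      "\<forall>A\<in>sets borel. measure \<rho> A = (\<Sum>s\<in>Sstar CARD('d) lam. c s * measure (rho_s H s lam) A)"
  shows "trace (Sigma_mat \<rho>) = Tstar CARD('d) lam"
proof -
  have prob: "prob_space \<rho>" and sets: "sets \<rho> = sets borel" using anc unfolding anchored_def by auto
  interpret prob_space \<rho> by (rule prob)
  have "measure \<rho> OS = (\<Sum>s\<in>Sstar CARD('d) lam. c s * measure (rho_s H s lam) OS)" using c(3) OS_sets by blast
  also have "\<dots> = (\<Sum>s\<in>Sstar CARD('d) lam. c s)" by (rule sum.cong[OF refl]) (simp add: OS_rho)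
  finally have "measure \<rho> OS = 1" using c(2) by simp
  then have aeOS: "AE x in \<rho>. x \<in> OS" by (rule AE_prob_1)
  have ae: "AE x in \<rho>. (norm x)^2 = Tstar CARD('d) lam"
    using aeOS
  proof eventually_elim
    case (elim x)
    then obtain s \<pi> where s: "s \<in> Sstar CARD('d) lam" "\<pi> \<in> Perms" "x = fs s \<pi>" unfolding OS_def Orb_def by auto
    have "s \<le> CARD('d)" using Sstar_range[OF s(1)] by simp
    then show ?case using norm_fs[of s \<pi>] s Tstar_S[OF s(1)] by simp
  qed
  then have bnd: "AE x in \<rho>. (norm x)^2 \<le> Tstar CARD('d) lam" by eventually_elim simp
  note TE = trace_eq[OF prob sets bnd]
  have m: "(\<lambda>x::real^'m. (norm x)^2) \<in> borel_measurable \<rho>"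
    by (subst measurable_cong_sets[OF sets refl]) measurable
  have "(\<integral>x. (norm x)^2 \<partial>\<rho>) = (\<integral>x. Tstar CARD('d) lam \<partial>\<rho>)"
    using ae m by (intro integral_cong_AE) auto
  then show ?thesis using TE(2) by (simp add: prob_space)
qed

lemma char_iff:
  assumes anc: "anchored H \<rho>" and ldp: "LDP H \<epsilon> \<rho>" and ex: "exchangeable H \<rho>" and lam: "lam = exp \<epsilon>"
  shows "trace (Sigma_mat \<rho>) = Tstar CARD('d) lam \<longleftrightarrow>
            (\<exists>c :: nat \<Rightarrow> real. (\<forall>s\<in>Sstar CARD('d) lam. c s \<ge> 0)
               \<and> (\<Sum>s\<in>Sstar CARD('d) lam. c s) = 1
               \<and> (\<forall>A\<in>sets borel. measure \<rho> A =
                    (\<Sum>s\<in>Sstar CARD('d) lam. c s * measure (rho_s H s lam) A)))"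
proof
  assume tr: "trace (Sigma_mat \<rho>) = Tstar CARD('d) lam"
  have prob: "prob_space \<rho>" and sets: "sets \<rho> = sets borel" using anc unfolding anchored_def by auto
  have ae: "AE x in \<rho>. x \<in> OS" by (rule feasible_OS[OF anc ldp lam tr])
  note D = exch_decomp[OF anc ex ae]
  have "emeasure \<rho> OS = 1" using prob_space.emeasure_eq_1_AE[OF prob _ ae] OS_sets sets by simp
  then have m1: "measure \<rho> OS = 1" by (simp add: measure_def)
  have "measure \<rho> OS = (\<Sum>s\<in>Sstar CARD('d) lam. measure \<rho> (Orb s) * measure (rho_s H s lam) OS)"
    by (rule D[OF OS_sets])
  also have "\<dots> = (\<Sum>s\<in>Sstar CARD('d) lam. measure \<rho> (Orb s))" by (rule sum.cong[OF refl]) (simp add: OS_rho)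
  finally have "(\<Sum>s\<in>Sstar CARD('d) lam. measure \<rho> (Orb s)) = 1" using m1 by simp
  then show "\<exists>c :: nat \<Rightarrow> real. (\<forall>s\<in>Sstar CARD('d) lam. c s \<ge> 0)
               \<and> (\<Sum>s\<in>Sstar CARD('d) lam. c s) = 1
               \<and> (\<forall>A\<in>sets borel. measure \<rho> A =
                    (\<Sum>s\<in>Sstar CARD('d) lam. c s * measure (rho_s H s lam) A))"
    using D by (intro exI[of _ "\<lambda>s. measure \<rho> (Orb s)"]) auto
next
  assume "\<exists>c :: nat \<Rightarrow> real. (\<forall>s\<in>Sstar CARD('d) lam. c s \<ge> 0)
               \<and> (\<Sum>s\<in>Sstar CARD('d) lam. c s) = 1
               \<and> (\<forall>A\<in>sets borel. measure \<rho> A =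
                    (\<Sum>s\<in>Sstar CARD('d) lam. c s * measure (rho_s H s lam) A))"
  then obtain c :: "nat \<Rightarrow> real" where c: "\<forall>s\<in>Sstar CARD('d) lam. c s \<ge> 0" "(\<Sum>s\<in>Sstar CARD('d) lam. c s) = 1"
      "\<forall>A\<in>sets borel. measure \<rho> A = (\<Sum>s\<in>Sstar CARD('d) lam. c s * measure (rho_s H s lam) A)" by blast
  show "trace (Sigma_mat \<rho>) = Tstar CARD('d) lam" by (rule mix_trace[OF anc c])
qed

end

context hl begin

definition MM :: "real \<Rightarrow> (real^'m) measure set" where
  "MM \<epsilon> = {\<mu>. anchored H \<mu> \<and> LDP H \<epsilon> \<mu> \<and> exchangeable H \<mu> \<and> trace (Sigma_mat \<mu>) = Tstar CARD('d) lam}"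

lemma MM_decomp:
  assumes mu: "\<mu> \<in> MM \<epsilon>" and lam: "lam = exp \<epsilon>"
  shows "\<forall>A\<in>sets borel. measure \<mu> A = (\<Sum>s\<in>Sstar CARD('d) lam. measure \<mu> (Orb s) * measure (rho_s H s lam) A)"
    and "(\<Sum>s\<in>Sstar CARD('d) lam. measure \<mu> (Orb s)) = 1"
proof -
  have anc: "anchored H \<mu>" and ldp: "LDP H \<epsilon> \<mu>" and ex: "exchangeable H \<mu>"
    and tr: "trace (Sigma_mat \<mu>) = Tstar CARD('d) lam" using mu unfolding MM_def by auto
  have prob: "prob_space \<mu>" and sets: "sets \<mu> = sets borel" using anc unfolding anchored_def by auto
  have ae: "AE x in \<mu>. x \<in> OS" by (rule feasible_OS[OF anc ldp lam tr])
  note D = exch_decomp[OF anc ex ae]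
  show "\<forall>A\<in>sets borel. measure \<mu> A = (\<Sum>s\<in>Sstar CARD('d) lam. measure \<mu> (Orb s) * measure (rho_s H s lam) A)"
    using D by blast
  have "emeasure \<mu> OS = 1" using prob_space.emeasure_eq_1_AE[OF prob _ ae] OS_sets sets by simp
  then have m1: "measure \<mu> OS = 1" by (simp add: measure_def)
  have "measure \<mu> OS = (\<Sum>s\<in>Sstar CARD('d) lam. measure \<mu> (Orb s) * measure (rho_s H s lam) OS)"
    by (rule D[OF OS_sets])
  also have "\<dots> = (\<Sum>s\<in>Sstar CARD('d) lam. measure \<mu> (Orb s))" by (rule sum.cong[OF refl]) (simp add: OS_rho)
  finally show "(\<Sum>s\<in>Sstar CARD('d) lam. measure \<mu> (Orb s)) = 1" using m1 by simp
qed

lemma rho_in_MM: assumes "s \<in> Sstar CARD('d) lam" "lam = exp \<epsilon>" shows "rho_s H s lam \<in> MM \<epsilon>"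
  using rho_good[OF assms] unfolding MM_def by auto

lemma only_s:
  assumes mu: "\<mu> \<in> MM \<epsilon>" and lam: "lam = exp \<epsilon>" and s: "s \<in> Sstar CARD('d) lam"
    and one: "measure \<mu> (Orb s) = 1"
  shows "\<mu> = rho_s H s lam"
proof -
  note D = MM_decomp[OF mu lam]
  have anc: "anchored H \<mu>" using mu unfolding MM_def by auto
  have prob: "prob_space \<mu>" and sets: "sets \<mu> = sets borel" using anc unfolding anchored_def by auto
  have "(\<Sum>r\<in>Sstar CARD('d) lam. measure \<mu> (Orb r)) = measure \<mu> (Orb s) + (\<Sum>r\<in>Sstar CARD('d) lam - {s}. measure \<mu> (Orb r))"
    using s Sstar_fin by (simp add: sum.remove)
  then have "(\<Sum>r\<in>Sstar CARD('d) lam - {s}. measure \<mu> (Orb r)) = 0" using D(2) one by simp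
  then have z: "\<forall>r\<in>Sstar CARD('d) lam - {s}. measure \<mu> (Orb r) = 0"
    using Sstar_fin by (subst sum_nonneg_eq_0_iff[symmetric]) auto
  show ?thesis
  proof (rule measure_eq_borel[OF prob prob_rho sets sets_rho], intro ballI)
    fix A :: "(real^'m) set" assume A: "A \<in> sets borel"
    have "measure \<mu> A = (\<Sum>r\<in>Sstar CARD('d) lam. measure \<mu> (Orb r) * measure (rho_s H r lam) A)" using D(1) A by blast
    also have "\<dots> = measure \<mu> (Orb s) * measure (rho_s H s lam) A + (\<Sum>r\<in>Sstar CARD('d) lam - {s}. measure \<mu> (Orb r) * measure (rho_s H r lam) A)"
      using s Sstar_fin by (simp add: sum.remove)
    also have "(\<Sum>r\<in>Sstar CARD('d) lam - {s}. measure \<mu> (Orb r) * measure (rho_s H r lam) A) = 0"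
      using z by simp
    finally show "measure \<mu> A = measure (rho_s H s lam) A" using one by simp
  qed
qed

lemma extreme_rho:
  assumes s: "s \<in> Sstar CARD('d) lam" and lam: "lam = exp \<epsilon>"
  shows "extreme_point (MM \<epsilon>) (rho_s H s lam)"
  unfolding extreme_point_def
proof (rule conjI)
  show "rho_s H s lam \<in> MM \<epsilon>" by (rule rho_in_MM[OF s lam])
  show "\<forall>\<mu>\<in>MM \<epsilon>. \<forall>\<nu>\<in>MM \<epsilon>. \<forall>t. 0 < t \<and> t < 1 \<and> is_mix (rho_s H s lam) t \<mu> \<nu> \<longrightarrow> \<mu> = rho_s H s lam \<and> \<nu> = rho_s H s lam"
  proof (intro ballI allI impI)
  fix \<mu> \<nu> t assume mu: "\<mu> \<in> MM \<epsilon>" and nu: "\<nu> \<in> MM \<epsilon>" and h: "0 < t \<and> t < 1 \<and> is_mix (rho_s H s lam) t \<mu> \<nu>"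
  have sd: "s < CARD('d)" using Sstar_range[OF s] by simp
  have "measure (rho_s H s lam) (Orb s) = t * measure \<mu> (Orb s) + (1 - t) * measure \<nu> (Orb s)"
    using h Orb_sets unfolding is_mix_def by blast
  then have e: "1 = t * measure \<mu> (Orb s) + (1 - t) * measure \<nu> (Orb s)" using measure_rho_Orb[OF sd sd] by simp
  have pm: "prob_space \<mu>" "prob_space \<nu>" using mu nu unfolding MM_def anchored_def by auto
  have le: "measure \<mu> (Orb s) \<le> 1" "measure \<nu> (Orb s) \<le> 1"
    using prob_space.prob_le_1[OF pm(1)] prob_space.prob_le_1[OF pm(2)] by auto
  have "t * (1 - measure \<mu> (Orb s)) + (1 - t) * (1 - measure \<nu> (Orb s)) = 0" using e by (simp add: algebra_simps)
  moreover have "t * (1 - measure \<mu> (Orb s)) \<ge> 0" "(1 - t) * (1 - measure \<nu> (Orb s)) \<ge> 0" using h le by auto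
  ultimately have "t * (1 - measure \<mu> (Orb s)) = 0" "(1 - t) * (1 - measure \<nu> (Orb s)) = 0" by linarith+
  then have "measure \<mu> (Orb s) = 1" "measure \<nu> (Orb s) = 1" using h by auto
  then show "\<mu> = rho_s H s lam \<and> \<nu> = rho_s H s lam" using only_s[OF mu lam s] only_s[OF nu lam s] by auto
  qed
qed

lemma extreme_is_rho:
  assumes ext: "extreme_point (MM \<epsilon>) \<rho>" and lam: "lam = exp \<epsilon>"
  shows "\<rho> \<in> (\<lambda>s. rho_s H s lam) ` Sstar CARD('d) lam"
proof -
  have rM: "\<rho> \<in> MM \<epsilon>" using ext unfolding extreme_point_def by auto
  note D = MM_decomp[OF rM lam]
  define c where "c s = measure \<rho> (Orb s)" for s
  have c0: "c s \<ge> 0" for s unfolding c_def by simp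
  have c1: "(\<Sum>s\<in>Sstar CARD('d) lam. c s) = 1" using D(2) unfolding c_def .
  obtain s where s: "s \<in> Sstar CARD('d) lam" "c s > 0"
  proof (rule ccontr)
    assume "\<not> thesis"
    then have "\<forall>s\<in>Sstar CARD('d) lam. c s \<le> 0" using that by (meson not_le)
    then have "(\<Sum>s\<in>Sstar CARD('d) lam. c s) \<le> 0" by (intro sum_nonpos) auto
    then show False using c1 by simp
  qed
  show ?thesis
  proof (cases "c s = 1")
    case True
    then have "\<rho> = rho_s H s lam" using only_s[OF rM lam s(1)] unfolding c_def by simp
    then show ?thesis using s by blast
  next
    case False
    have sum_split: "(\<Sum>r\<in>Sstar CARD('d) lam. c r) = c s + (\<Sum>r\<in>Sstar CARD('d) lam - {s}. c r)"
      using s Sstar_fin by (simp add: sum.remove)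
    have cs1: "c s < 1"
    proof -
      have "(\<Sum>r\<in>Sstar CARD('d) lam - {s}. c r) \<ge> 0" using c0 by (simp add: sum_nonneg)
      then show ?thesis using sum_split c1 False by linarith
    qed
    then have "(\<Sum>r\<in>Sstar CARD('d) lam - {s}. c r) > 0" using sum_split c1 by simp
    then obtain r where r: "r \<in> Sstar CARD('d) lam - {s}" "c r > 0"
      by (metis not_le sum_nonpos)
    have lam1': "lam > 1" by (rule lam1)
    have sub: "Sstar CARD('d) lam \<subseteq> {nat \<lfloor>real CARD('d) / (lam + 1)\<rfloor>, nat \<lceil>real CARD('d) / (lam + 1)\<rceil>} \<inter> {1..CARD('d) - 1}"
      using Sstar_sub[OF d2 lam1'] .
    have SS: "Sstar CARD('d) lam = {s, r}"
      using sub s(1) r(1) by blast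
    have rs: "r \<noteq> s" using r by simp
    have crs: "c s + c r = 1" using c1 SS rs by simp
    have mix: "is_mix \<rho> (c s) (rho_s H s lam) (rho_s H r lam)"
      unfolding is_mix_def
    proof
      fix A :: "(real^'m) set" assume A: "A \<in> sets borel"
      have "measure \<rho> A = (\<Sum>q\<in>{s, r}. c q * measure (rho_s H q lam) A)" using D(1) A SS unfolding c_def by simp
      also have "\<dots> = c s * measure (rho_s H s lam) A + c r * measure (rho_s H r lam) A" using rs by simp
      moreover have "1 - c s = c r" using crs by simp
      ultimately show "measure \<rho> A = c s * measure (rho_s H s lam) A + (1 - c s) * measure (rho_s H r lam) A"
        by simp
    qed
    have "rho_s H s lam = \<rho>"
      using ext rho_in_MM[OF s(1) lam] rho_in_MM[of r, OF _ lam] r(1) s(2) cs1 mix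
      unfolding extreme_point_def by blast
    moreover have "measure (rho_s H s lam) (Orb r) = 0"
      using measure_rho_Orb[of s r] Sstar_range[OF s(1)] Sstar_range[of r] r rs by auto
    ultimately show ?thesis using r(2) unfolding c_def by simp
  qed
qed

lemma extreme_set:
  assumes lam: "lam = exp \<epsilon>"
  shows "{\<rho>. extreme_point (MM \<epsilon>) \<rho>} = (\<lambda>s. rho_s H s lam) ` Sstar CARD('d) lam"
  using extreme_is_rho[OF _ lam] extreme_rho[OF _ lam] by blast

end

theorem theorem9p3:
  fixes H :: "real^'m^'d::{finite,linorder}" and \<epsilon> :: real
  assumes d2: "CARD('d) \<ge> 2"
    and dim: "CARD('m) + 1 = CARD('d)"
    and orth: "transpose H ** H = mat 1"
    and span: "{H *v y | y. True} = {u. (\<Sum>i\<in>UNIV. u$i) = 0}"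
    and eps: "\<epsilon> > 0"
  defines "lam \<equiv> exp \<epsilon>"
  shows "Sup {trace (Sigma_mat \<rho>) | \<rho>. anchored H \<rho> \<and> LDP H \<epsilon> \<rho>} = Tstar CARD('d) lam
    \<and> (\<forall>s\<in>Sstar CARD('d) lam. anchored H (rho_s H s lam) \<and> LDP H \<epsilon> (rho_s H s lam)
            \<and> trace (Sigma_mat (rho_s H s lam)) = Tstar CARD('d) lam)
    \<and> (\<forall>\<rho>. anchored H \<rho> \<and> LDP H \<epsilon> \<rho> \<and> exchangeable H \<rho> \<longrightarrow>
           (trace (Sigma_mat \<rho>) = Tstar CARD('d) lam \<longleftrightarrow>
            (\<exists>c :: nat \<Rightarrow> real. (\<forall>s\<in>Sstar CARD('d) lam. c s \<ge> 0)
               \<and> (\<Sum>s\<in>Sstar CARD('d) lam. c s) = 1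
               \<and> (\<forall>A\<in>sets borel. measure \<rho> A =
                    (\<Sum>s\<in>Sstar CARD('d) lam. c s * measure (rho_s H s lam) A)))))
    \<and> {\<rho>. extreme_point
              {\<mu>. anchored H \<mu> \<and> LDP H \<epsilon> \<mu> \<and> exchangeable H \<mu>
                   \<and> trace (Sigma_mat \<mu>) = Tstar CARD('d) lam} \<rho>}
         = (\<lambda>s. rho_s H s lam) ` Sstar CARD('d) lam
    \<and> Sstar CARD('d) lam \<subseteq>
           {nat \<lfloor>real CARD('d) / (lam + 1)\<rfloor>, nat \<lceil>real CARD('d) / (lam + 1)\<rceil>} \<inter> {1..CARD('d) - 1}"
proof -
  have lam1: "lam > 1" unfolding lam_def using eps by simp
  have lamE: "lam = exp \<epsilon>" by (simp add: lam_def)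
  interpret hl H lam
    by unfold_locales (use d2 orth span lam1 in auto)
  have fin: "finite (T CARD('d) lam ` {1..CARD('d) - 1})" by simp
  have ne: "T CARD('d) lam ` {1..CARD('d) - 1} \<noteq> {}" using d2 by auto
  have "Tstar CARD('d) lam \<in> T CARD('d) lam ` {1..CARD('d) - 1}"
    unfolding Tstar_def by (rule Max_in[OF fin ne])
  then obtain s0 where s0: "s0 \<in> {1..CARD('d) - 1}" "T CARD('d) lam s0 = Tstar CARD('d) lam" by auto
  then have s0S: "s0 \<in> Sstar CARD('d) lam" unfolding Sstar_def by simp
  have c1: "Sup {trace (Sigma_mat \<rho>) | \<rho>. anchored H \<rho> \<and> LDP H \<epsilon> \<rho>} = Tstar CARD('d) lam"
  proof (rule cSup_eq_maximum)
    show "Tstar CARD('d) lam \<in> {trace (Sigma_mat \<rho>) | \<rho>. anchored H \<rho> \<and> LDP H \<epsilon> \<rho>}"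
      using rho_good[OF s0S lamE] by (intro CollectI exI[of _ "rho_s H s0 lam"]) auto
    fix x assume "x \<in> {trace (Sigma_mat \<rho>) | \<rho>. anchored H \<rho> \<and> LDP H \<epsilon> \<rho>}"
    then obtain \<rho> where "x = trace (Sigma_mat \<rho>)" "anchored H \<rho>" "LDP H \<epsilon> \<rho>" by auto
    then show "x \<le> Tstar CARD('d) lam" using feasible_bound(2)[OF _ _ lamE] by simp
  qed
  have c2: "\<forall>s\<in>Sstar CARD('d) lam. anchored H (rho_s H s lam) \<and> LDP H \<epsilon> (rho_s H s lam)
            \<and> trace (Sigma_mat (rho_s H s lam)) = Tstar CARD('d) lam"
    using rho_good[OF _ lamE] by blast
  have c3: "\<forall>\<rho>. anchored H \<rho> \<and> LDP H \<epsilon> \<rho> \<and> exchangeable H \<rho> \<longrightarrow>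
           (trace (Sigma_mat \<rho>) = Tstar CARD('d) lam \<longleftrightarrow>
            (\<exists>c :: nat \<Rightarrow> real. (\<forall>s\<in>Sstar CARD('d) lam. c s \<ge> 0)
               \<and> (\<Sum>s\<in>Sstar CARD('d) lam. c s) = 1
               \<and> (\<forall>A\<in>sets borel. measure \<rho> A =
                    (\<Sum>s\<in>Sstar CARD('d) lam. c s * measure (rho_s H s lam) A))))"
    using char_iff[OF _ _ _ lamE] by blast
  have c4: "{\<rho>. extreme_point
              {\<mu>. anchored H \<mu> \<and> LDP H \<epsilon> \<mu> \<and> exchangeable H \<mu>
                   \<and> trace (Sigma_mat \<mu>) = Tstar CARD('d) lam} \<rho>}
         = (\<lambda>s. rho_s H s lam) ` Sstar CARD('d) lam"
    using extreme_set[OF lamE] unfolding MM_def .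
  have c5: "Sstar CARD('d) lam \<subseteq>
           {nat \<lfloor>real CARD('d) / (lam + 1)\<rfloor>, nat \<lceil>real CARD('d) / (lam + 1)\<rceil>} \<inter> {1..CARD('d) - 1}"
    by (rule Sstar_sub[OF d2 lam1])
  show ?thesis using c1 c2 c3 c4 c5 by blast
qed

end
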